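(* Let $(a,b)\in\overline{\mathbf H}$. There is a unique $y\in\mathbb C$ for which there exists $(c,d)\in\overline{\mathbf H}$ with $$(c(z),d(z)z)=(1+|y|^2)^{-1/2}(1,-y)(a(z),b(z))\quad\text{for a.e. }z\in\mathbb T.$$ Consequently one may define recursively $(a_0,b_0)=(a,b)$ and, for $n\ge0$, $(a_{n+1}(z),b_{n+1}(z)z)=(1+|F_n|^2)^{-1/2}(1,-F_n)(a_n(z),b_n(z))$, where $F_n$ is the unique complex number such that $(a_{n+1},b_{n+1})\in\overline{\mathbf H}$. Then the sequence $(F_n)_{n\ge0}$ is square summable and $$a(\infty)\le\prod_{n\ge0}(1+|F_n|^2)^{-1/2}.$$ If $(a,b)\notin\mathbf H$, the inequality is strict.
   Context: $\mathbb T$ is the unit circle, $\mathbb D$ the open unit disc, $\mathbb D^*=\{\overline z^{-1}:z\in\mathbb D\}$, $a^*(z)=\overline{a(\overline z^{-1})}$ (so $a^*=\overline a$ on $\mathbb T$). $H^2(\mathbb D)$ is the space of $f\in L^2(\mathbb T)$ with vanishing negative Fourier coefficients (identified with its analytic extension to $\mathbb D$); $H^2(\mathbb D^* )$ the space of $f$ with $f^*\in H^2(\mathbb D)$, and $f(\infty):=\overline{f^*(0)}$. Pairs multiply as $(a,b)(c,d)=(ac-bd^*,ad+bc^* )$, with $y^*=\overline y$ for a constant $y$; thus $(1,-y)(a,b)=(a+yb^*,b-ya^* )$. $\mathbf L$ is the set of pairs $(a,b)$ of measurable functions on $\mathbb T$ with $aa^*+bb^*=1$ a.e., $a\in H^2(\mathbb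 D^* )$, $a(\infty)>0$. $\overline{\mathbf H}$ is the set of $(a,b)\in\mathbf L$ with $b\in H^2(\mathbb D)$. $\mathbf H$ is the set of $(a,b)\in\overline{\mathbf H}$ such that $a^*$ and $b$ have no common inner factor: whenever $g$ is an inner function (an $H^\infty(\mathbb D)$ function with $|g|=1$ a.e. on $\mathbb T$) with $a^*g^{-1},bg^{-1}\in H^2(\mathbb D)$, $g$ is constant. *)

theory Defs
  imports "HOL-Analysis.Analysis"
begin

text \<open>Functions on the unit circle T are functions complex \<Rightarrow> complex, considered only
  on T and parametrised by t \<mapsto> cis t, t \<in> [0, 2 pi], with Lebesgue measure.\<close>

definition T_meas :: "real measure" where
  "T_meas = lebesgue_on {0..2*pi}"

definition ae_T :: "(complex \<Rightarrow> bool) \<Rightarrow> bool" where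
  "ae_T P \<longleftrightarrow> (AE t in T_meas. P (cis t))"

definition meas_T :: "(complex \<Rightarrow> complex) \<Rightarrow> bool" where
  "meas_T f \<longleftrightarrow> (\<lambda>t. f (cis t)) \<in> borel_measurable T_meas"

definition L2_T :: "(complex \<Rightarrow> complex) \<Rightarrow> bool" where
  "L2_T f \<longleftrightarrow> meas_T f \<and> integrable T_meas (\<lambda>t. (cmod (f (cis t)))\<^sup>2)"

definition fourier_coeff :: "(complex \<Rightarrow> complex) \<Rightarrow> int \<Rightarrow> complex" where
  "fourier_coeff f n = complex_of_real (1 / (2*pi)) *
      integral\<^sup>L T_meas (\<lambda>t. f (cis t) * cis (- (of_int n * t)))"

text \<open>a^*(z) = conj (a (1 / conj z)); on T this is conj a.\<close>
definition star_fun :: "(complex \<Rightarrow> complex) \<Rightarrow> complex \<Rightarrow> complex" where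
  "star_fun a z = cnj (a (inverse (cnj z)))"

definition H2_D :: "(complex \<Rightarrow> complex) \<Rightarrow> bool" where
  "H2_D f \<longleftrightarrow> L2_T f \<and> (\<forall>n<0. fourier_coeff f n = 0)"

definition H2_Dstar :: "(complex \<Rightarrow> complex) \<Rightarrow> bool" where
  "H2_Dstar f \<longleftrightarrow> H2_D (star_fun f)"

definition H2_ext :: "(complex \<Rightarrow> complex) \<Rightarrow> complex \<Rightarrow> complex" where
  "H2_ext f z = (\<Sum>n. fourier_coeff f (int n) * z ^ n)"

definition at_inf :: "(complex \<Rightarrow> complex) \<Rightarrow> complex" where
  "at_inf f = cnj (H2_ext (star_fun f) 0)"

definition pmult :: "(complex \<Rightarrow> complex) \<times> (complex \<Rightarrow> complex) \<Rightarrow>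
    (complex \<Rightarrow> complex) \<times> (complex \<Rightarrow> complex) \<Rightarrow> (complex \<Rightarrow> complex) \<times> (complex \<Rightarrow> complex)" where
  "pmult p q = (case p of (a, b) \<Rightarrow> case q of (c, d) \<Rightarrow>
     (\<lambda>z. a z * c z - b z * star_fun d z, \<lambda>z. a z * d z + b z * star_fun c z))"

definition Lset :: "((complex \<Rightarrow> complex) \<times> (complex \<Rightarrow> complex)) set" where
  "Lset = {(a, b). meas_T a \<and> meas_T b \<and>
     ae_T (\<lambda>z. a z * star_fun a z + b z * star_fun b z = 1) \<and>
     H2_Dstar a \<and> at_inf a \<in> \<real> \<and> Re (at_inf a) > 0}"

definition Hbar :: "((complex \<Rightarrow> complex) \<times> (complex \<Rightarrow> complex)) set" where
  "Hbar = {(a, b). (a, b) \<in> Lset \<and> H2_D b}"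

text \<open>Inner functions, identified with their boundary values on T
  (H^\<infinity>(D) = H^2(D) \<inter> L^\<infinity>(T); |g| = 1 a.e. gives boundedness).\<close>
definition inner_fun :: "(complex \<Rightarrow> complex) \<Rightarrow> bool" where
  "inner_fun g \<longleftrightarrow> H2_D g \<and> ae_T (\<lambda>z. cmod (g z) = 1)"

definition Hset :: "((complex \<Rightarrow> complex) \<times> (complex \<Rightarrow> complex)) set" where
  "Hset = {(a, b). (a, b) \<in> Hbar \<and>
     (\<forall>g. inner_fun g \<and> H2_D (\<lambda>z. star_fun a z / g z) \<and> H2_D (\<lambda>z. b z / g z)
        \<longrightarrow> (\<exists>c. ae_T (\<lambda>z. g z = c)))}"

definition step_rel :: "(complex \<Rightarrow> complex) \<Rightarrow> (complex \<Rightarrow> complex) \<Rightarrow> complex \<Rightarrow>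
    (complex \<Rightarrow> complex) \<Rightarrow> (complex \<Rightarrow> complex) \<Rightarrow> bool" where
  "step_rel a b y c d \<longleftrightarrow>
     ae_T (\<lambda>z. (c z, d z * z) =
        (complex_of_real (1 / sqrt (1 + (cmod y)\<^sup>2)) * fst (pmult (\<lambda>_. 1, \<lambda>_. - y) (a, b)) z,
         complex_of_real (1 / sqrt (1 + (cmod y)\<^sup>2)) * snd (pmult (\<lambda>_. 1, \<lambda>_. - y) (a, b)) z))"

end

theory Submission
  imports Defs
begin


lemma le_1_sq: "(x::real) \<le> 1 + x\<^sup>2"
proof -
  have "0 \<le> (x - 1/2)\<^sup>2" by simp
  then show ?thesis by (simp add: power2_eq_square algebra_simps)
qed
lemma mult_le_sq: "(x::real) * y \<le> x\<^sup>2 + y\<^sup>2"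
proof -
  have "0 \<le> (x - y)\<^sup>2" by simp
  have "0 \<le> x\<^sup>2 + y\<^sup>2 - 2 * x * y" using \<open>0 \<le> (x - y)\<^sup>2\<close> by (simp add: power2_diff)
  moreover have "0 \<le> x\<^sup>2 + y\<^sup>2" by simp
  ultimately show ?thesis by linarith
qed
lemma sum_sq_le: "((x::real) + y)\<^sup>2 \<le> 2 * x\<^sup>2 + 2 * y\<^sup>2"
proof -
  have "0 \<le> (x - y)\<^sup>2" by simp
  then show ?thesis by (simp add: power2_sum power2_diff)
qed


lemma space_T [simp]: "space T_meas = {0..2*pi}"
  by (simp add: T_meas_def)

lemma Icc_lebesgue: "{0..2*pi} \<in> sets lebesgue"
  by simp

lemma sets_T_lebesgue: "A \<in> sets T_meas \<Longrightarrow> A \<in> sets lebesgue \<and> A \<subseteq> {0..2*pi}"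
  unfolding T_meas_def
  using sets_restrict_space_iff[of "{0..2*pi}" lebesgue A] Icc_lebesgue by auto

lemma finite_T: "finite_measure T_meas"
  unfolding T_meas_def by (rule finite_measure_lebesgue_on) simp

lemma emeasure_T: "emeasure T_meas {0..2*pi} = ennreal (2*pi)"
  unfolding T_meas_def by (simp add: emeasure_restrict_space)

lemma measure_T: "measure T_meas {0..2*pi} = 2*pi"
  unfolding measure_def emeasure_T by simp

lemma star_fun_cis [simp]: "star_fun f (cis t) = cnj (f (cis t))"
  by (simp add: star_fun_def cis_cnj)

lemma star_star [simp]: "star_fun (star_fun f) = f"
  by (rule ext) (simp add: star_fun_def complex_cnj_inverse)

lemma cis_meas [measurable]: "cis \<in> borel_measurable T_meas"
  unfolding T_meas_def
  by (intro continuous_imp_measurable_on_sets_lebesgue continuous_intros) auto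

lemma cnj_meas [measurable]: "f \<in> borel_measurable M \<Longrightarrow> (\<lambda>x. cnj (f x)) \<in> borel_measurable M"
  by (rule borel_measurable_continuous_on[where f=cnj]) (rule continuous_on_cnj[OF continuous_on_id])

lemma meas_T_star: "meas_T (star_fun f) \<longleftrightarrow> meas_T f"
proof -
  have "(\<lambda>t. star_fun f (cis t)) = (\<lambda>t. cnj (f (cis t)))" by simp
  show ?thesis unfolding meas_T_def
  proof
    assume "(\<lambda>t. star_fun f (cis t)) \<in> borel_measurable T_meas"
    from cnj_meas[OF this] show "(\<lambda>t. f (cis t)) \<in> borel_measurable T_meas" by simp
  next
    assume "(\<lambda>t. f (cis t)) \<in> borel_measurable T_meas"
    then show "(\<lambda>t. star_fun f (cis t)) \<in> borel_measurable T_meas"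
      by (simp add: cnj_meas)
  qed
qed

lemma integrable_T_const: "integrable T_meas (\<lambda>t. c::'a::{banach,second_countable_topology})"
  using finite_T finite_measure.integrable_const by blast



section \<open>L2 on the circle, Fourier coefficients\<close>

definition L2r :: "(real \<Rightarrow> complex) \<Rightarrow> bool" where
  "L2r h \<longleftrightarrow> h \<in> borel_measurable T_meas \<and> integrable T_meas (\<lambda>t. (cmod (h t))\<^sup>2)"

definition fc :: "(real \<Rightarrow> complex) \<Rightarrow> int \<Rightarrow> complex" where
  "fc h n = complex_of_real (1 / (2*pi)) * integral\<^sup>L T_meas (\<lambda>t. h t * cis (- (of_int n * t)))"

lemma L2_T_iff: "L2_T f \<longleftrightarrow> L2r (\<lambda>t. f (cis t))"
  by (simp add: L2_T_def L2r_def meas_T_def)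

lemma fourier_coeff_fc: "fourier_coeff f n = fc (\<lambda>t. f (cis t)) n"
  by (simp add: fourier_coeff_def fc_def)

lemma at_inf_fc: "at_inf f = cnj (fc (\<lambda>t. cnj (f (cis t))) 0)"
  by (simp add: at_inf_def H2_ext_def fourier_coeff_fc)

lemma integrable_T_bound:
  fixes h :: "real \<Rightarrow> complex"
  assumes "h \<in> borel_measurable T_meas" "AE t in T_meas. cmod (h t) \<le> C"
  shows "integrable T_meas h"
proof (rule Bochner_Integration.integrable_bound[OF integrable_T_const[of C]])
  show "h \<in> borel_measurable T_meas" by fact
  show "AE x in T_meas. norm (h x) \<le> norm C"
    using assms(2) by eventually_elim auto
qed

lemma L2r_integrable:
  assumes "L2r h" shows "integrable T_meas h"
proof (rule Bochner_Integration.integrable_bound)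
  show "integrable T_meas (\<lambda>t. 1 + (cmod (h t))\<^sup>2)"
    using assms integrable_T_const[of "1::real"] unfolding L2r_def by (intro Bochner_Integration.integrable_add) auto
  show "h \<in> borel_measurable T_meas" using assms unfolding L2r_def by auto
  show "AE x in T_meas. norm (h x) \<le> norm (1 + (cmod (h x))\<^sup>2)"
  proof (rule AE_I2)
    fix x
    have "cmod (h x) \<le> 1 + (cmod (h x))\<^sup>2"
      by (rule le_1_sq)
    then show "norm (h x) \<le> norm (1 + (cmod (h x))\<^sup>2)" by simp
  qed
qed

lemma L2r_meas: "L2r h \<Longrightarrow> h \<in> borel_measurable T_meas"
  by (simp add: L2r_def)

lemma L2r_bounded:
  assumes "h \<in> borel_measurable T_meas" "AE t in T_meas. cmod (h t) \<le> C"
  shows "L2r h"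
  unfolding L2r_def
proof
  show "h \<in> borel_measurable T_meas" by fact
  show "integrable T_meas (\<lambda>t. (cmod (h t))\<^sup>2)"
  proof (rule Bochner_Integration.integrable_bound[OF integrable_T_const[of "C\<^sup>2"]])
    have [measurable]: "h \<in> borel_measurable T_meas" by fact
    show "(\<lambda>t. (cmod (h t))\<^sup>2) \<in> borel_measurable T_meas" by measurable
    show "AE x in T_meas. norm ((cmod (h x))\<^sup>2) \<le> norm (C\<^sup>2)"
      using assms(2)
    proof eventually_elim
      case (elim x)
      then have "(cmod (h x))\<^sup>2 \<le> C\<^sup>2" by (intro power_mono) auto
      then show ?case by simp
    qed
  qed
qed

lemma norm_sq_add_le: "(cmod (x + y))\<^sup>2 \<le> 2 * (cmod x)\<^sup>2 + 2 * (cmod y)\<^sup>2"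
proof -
  have "cmod (x + y) \<le> cmod x + cmod y" by (rule norm_triangle_ineq)
  then have "(cmod (x + y))\<^sup>2 \<le> (cmod x + cmod y)\<^sup>2"
    by (simp add: power_mono)
  also have "\<dots> \<le> 2 * (cmod x)\<^sup>2 + 2 * (cmod y)\<^sup>2"
    by (rule sum_sq_le)
  finally show ?thesis .
qed

lemma L2r_add:
  assumes "L2r h" "L2r k" shows "L2r (\<lambda>t. h t + k t)"
  unfolding L2r_def
proof
  show "(\<lambda>t. h t + k t) \<in> borel_measurable T_meas" using assms unfolding L2r_def by auto
  show "integrable T_meas (\<lambda>t. (cmod (h t + k t))\<^sup>2)"
  proof (rule Bochner_Integration.integrable_bound)
    show "integrable T_meas (\<lambda>t. 2 * (cmod (h t))\<^sup>2 + 2 * (cmod (k t))\<^sup>2)"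
      using assms unfolding L2r_def by auto
    have [measurable]: "h \<in> borel_measurable T_meas" "k \<in> borel_measurable T_meas"
      using assms unfolding L2r_def by auto
    show "(\<lambda>t. (cmod (h t + k t))\<^sup>2) \<in> borel_measurable T_meas"
      by measurable
    show "AE x in T_meas. norm ((cmod (h x + k x))\<^sup>2) \<le> norm (2 * (cmod (h x))\<^sup>2 + 2 * (cmod (k x))\<^sup>2)"
      using norm_sq_add_le by (intro AE_I2) simp
  qed
qed

lemma L2r_scale:
  assumes "L2r h" shows "L2r (\<lambda>t. c * h t)"
  using assms unfolding L2r_def by (auto simp: norm_mult power_mult_distrib)

lemma L2r_cnj:
  assumes "L2r h" shows "L2r (\<lambda>t. cnj (h t))"
  using assms unfolding L2r_def by auto

lemma L2r_diff:
  assumes "L2r h" "L2r k" shows "L2r (\<lambda>t. h t - k t)"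
  using L2r_add[OF assms(1) L2r_scale[OF assms(2), of "-1"]] by simp

lemma L2r_mult_bounded:
  assumes "L2r h" "u \<in> borel_measurable T_meas" "AE t in T_meas. cmod (u t) \<le> C"
  shows "L2r (\<lambda>t. h t * u t)"
  unfolding L2r_def
proof
  show "(\<lambda>t. h t * u t) \<in> borel_measurable T_meas" using assms unfolding L2r_def by auto
  show "integrable T_meas (\<lambda>t. (cmod (h t * u t))\<^sup>2)"
  proof (rule Bochner_Integration.integrable_bound)
    show "integrable T_meas (\<lambda>t. C\<^sup>2 * (cmod (h t))\<^sup>2)"
      using assms unfolding L2r_def by auto
    have [measurable]: "h \<in> borel_measurable T_meas" "u \<in> borel_measurable T_meas"
      using assms unfolding L2r_def by auto
    show "(\<lambda>t. (cmod (h t * u t))\<^sup>2) \<in> borel_measurable T_meas"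
      by measurable
    show "AE x in T_meas. norm ((cmod (h x * u x))\<^sup>2) \<le> norm (C\<^sup>2 * (cmod (h x))\<^sup>2)"
      using assms(3)
    proof eventually_elim
      case (elim x)
      have "(cmod (u x))\<^sup>2 \<le> C\<^sup>2" using elim
        by (meson norm_ge_zero order_trans power_mono)
      then have "(cmod (u x))\<^sup>2 * (cmod (h x))\<^sup>2 \<le> C\<^sup>2 * (cmod (h x))\<^sup>2"
        by (simp add: mult_right_mono)
      then show ?case by (simp add: norm_mult power_mult_distrib mult.commute)
    qed
  qed
qed

lemma integrable_mult_L2:
  assumes "L2r h" "L2r k" shows "integrable T_meas (\<lambda>t. h t * k t)"
proof (rule Bochner_Integration.integrable_bound)
  show "integrable T_meas (\<lambda>t. (cmod (h t))\<^sup>2 + (cmod (k t))\<^sup>2)"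
    using assms unfolding L2r_def by auto
  show "(\<lambda>t. h t * k t) \<in> borel_measurable T_meas" using assms unfolding L2r_def by auto
  show "AE x in T_meas. norm (h x * k x) \<le> norm ((cmod (h x))\<^sup>2 + (cmod (k x))\<^sup>2)"
  proof (rule AE_I2)
    fix x
    have "cmod (h x) * cmod (k x) \<le> (cmod (h x))\<^sup>2 + (cmod (k x))\<^sup>2"
      by (rule mult_le_sq)
    then show "norm (h x * k x) \<le> norm ((cmod (h x))\<^sup>2 + (cmod (k x))\<^sup>2)"
      by (simp add: norm_mult)
  qed
qed

lemma cis_lin_meas [measurable]: "(\<lambda>t. cis (c * t)) \<in> borel_measurable T_meas"
  unfolding T_meas_def
  by (intro continuous_imp_measurable_on_sets_lebesgue continuous_intros) auto

lemma integrable_mult_cis: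
  assumes "integrable T_meas h"
  shows "integrable T_meas (\<lambda>t. h t * cis (c * t))"
proof (rule Bochner_Integration.integrable_bound[OF assms])
  have [measurable]: "h \<in> borel_measurable T_meas" using assms by auto
  show "(\<lambda>t. h t * cis (c * t)) \<in> borel_measurable T_meas" by measurable
  show "AE x in T_meas. norm (h x * cis (c * x)) \<le> norm (h x)"
    by (intro AE_I2) (simp add: norm_mult)
qed



lemma cont_meas_T: "continuous_on UNIV g \<Longrightarrow> g \<in> borel_measurable T_meas"
  unfolding T_meas_def
  by (rule continuous_imp_measurable_on_sets_lebesgue) (auto intro: continuous_on_subset)

lemma cis_meas1 [measurable]: "(\<lambda>t. cis (- (of_int n * t))) \<in> borel_measurable T_meas"
  by (rule cont_meas_T) (intro continuous_intros)

lemma cis_meas2 [measurable]: "(\<lambda>t. cis (of_int n * t)) \<in> borel_measurable T_meas"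
  by (rule cont_meas_T) (intro continuous_intros)

lemma cis_meas3 [measurable]: "(\<lambda>t. cis (- t)) \<in> borel_measurable T_meas"
  by (rule cont_meas_T) (intro continuous_intros)

lemma integral_T_Henstock:
  fixes f :: "real \<Rightarrow> complex"
  assumes "integrable T_meas f"
  shows "integral\<^sup>L T_meas f = integral {0..2*pi} f"
  using has_integral_integral_lebesgue_on[of "{0..2*pi}" f] assms
  unfolding T_meas_def by (simp add: integral_unique)

lemma int_cis:
  fixes k :: int
  shows "integral\<^sup>L T_meas (\<lambda>t. cis (of_int k * t)) = (if k = 0 then complex_of_real (2*pi) else 0)"
proof -
  have int: "integrable T_meas (\<lambda>t. cis (of_int k * t))"
    by (rule integrable_T_bound[where C=1]) (auto intro!: AE_I2)
  show ?thesis
  proof (cases "k = 0")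
    case True
    then show ?thesis using measure_T by (simp add: scaleR_conv_of_real)
  next
    case False
    have eq: "(\<lambda>t. cis (of_int k * t)) = (\<lambda>t. exp ((\<i> * of_int k) * complex_of_real t))"
      by (rule ext) (simp add: cis_conv_exp mult.commute mult.left_commute)
    have "integral {0..2*pi} (\<lambda>t. exp ((\<i> * of_int k) * complex_of_real t))
        = (exp ((\<i> * of_int k) * of_real (2*pi)) - 1) / (\<i> * of_int k)"
      using False by (intro integral_exp) auto
    also have "exp ((\<i> * of_int k) * of_real (2*pi)) = cis (2 * pi * of_int k)"
      by (simp add: cis_conv_exp mult.commute mult.left_commute)
    also have "\<dots> = 1"
      by (rule cis_multiple_2pi) simp
    finally show ?thesis
      using False integral_T_Henstock[OF int] eq by simp
  qed
qed

lemma integrable_mult_cis':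
  assumes "integrable T_meas h"
  shows "integrable T_meas (\<lambda>t. h t * cis (- (of_int n * t)))"
  using integrable_mult_cis[OF assms, of "- of_int n"] by simp

lemma fc_add:
  assumes "integrable T_meas h" "integrable T_meas k"
  shows "fc (\<lambda>t. h t + k t) n = fc h n + fc k n"
proof -
  have "(\<lambda>t. (h t + k t) * cis (- (of_int n * t))) = (\<lambda>t. h t * cis (- (of_int n * t)) + k t * cis (- (of_int n * t)))"
    by (simp add: algebra_simps)
  then show ?thesis
    unfolding fc_def using integrable_mult_cis'[OF assms(1)] integrable_mult_cis'[OF assms(2)]
    by (simp add: algebra_simps)
qed

lemma fc_scale: "fc (\<lambda>t. c * h t) n = c * fc h n"
  unfolding fc_def by (simp add: mult.assoc mult.left_commute)

lemma fc_diff: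
  assumes "integrable T_meas h" "integrable T_meas k"
  shows "fc (\<lambda>t. h t - k t) n = fc h n - fc k n"
  using fc_add[OF assms(1), of "\<lambda>t. (-1) * k t"] fc_scale[of "-1" k] assms(2) by simp

lemma fc_cong:
  assumes "h \<in> borel_measurable T_meas" "k \<in> borel_measurable T_meas"
    "AE t in T_meas. h t = k t"
  shows "fc h n = fc k n"
  unfolding fc_def
proof -
  have [measurable]: "h \<in> borel_measurable T_meas" "k \<in> borel_measurable T_meas" by fact+
  have "integral\<^sup>L T_meas (\<lambda>t. h t * cis (- (of_int n * t))) = integral\<^sup>L T_meas (\<lambda>t. k t * cis (- (of_int n * t)))"
  proof (rule integral_cong_AE)
    show "(\<lambda>t. h t * cis (- (of_int n * t))) \<in> borel_measurable T_meas" by measurable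
    show "(\<lambda>t. k t * cis (- (of_int n * t))) \<in> borel_measurable T_meas" by measurable
    show "AE x in T_meas. h x * cis (- (of_int n * x)) = k x * cis (- (of_int n * x))"
      using assms(3) by (auto elim: eventually_mono)
  qed
  then show "complex_of_real (1 / (2 * pi)) * integral\<^sup>L T_meas (\<lambda>t. h t * cis (- (of_int n * t))) =
    complex_of_real (1 / (2 * pi)) * integral\<^sup>L T_meas (\<lambda>t. k t * cis (- (of_int n * t)))" by simp
qed

lemma fc_shift_mult: "fc (\<lambda>t. h t * cis t) n = fc h (n - 1)"
proof -
  have "(\<lambda>t. h t * cis t * cis (- (of_int n * t))) = (\<lambda>t. h t * cis (- (of_int (n - 1) * t)))"
    by (rule ext) (simp add: mult.assoc cis_mult algebra_simps)
  then show ?thesis unfolding fc_def by simp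
qed

lemma fc_shift_div: "fc (\<lambda>t. h t * cis (- t)) n = fc h (n + 1)"
proof -
  have "(\<lambda>t. h t * cis (- t) * cis (- (of_int n * t))) = (\<lambda>t. h t * cis (- (of_int (n + 1) * t)))"
    by (rule ext) (simp add: mult.assoc cis_mult algebra_simps)
  then show ?thesis unfolding fc_def by simp
qed

lemma fc_exp: "fc (\<lambda>t. cis (of_int m * t)) n = (if m = n then 1 else 0)"
proof -
  have e: "(\<lambda>t. cis (of_int m * t) * cis (- (of_int n * t))) = (\<lambda>t. cis (of_int (m - n) * t))"
    by (rule ext) (simp add: cis_mult algebra_simps)
  show ?thesis unfolding fc_def e int_cis by simp
qed

lemma fc_const: "fc (\<lambda>t. c) n = (if n = 0 then c else 0)"
  using fc_scale[of c "\<lambda>t. cis (of_int 0 * t)" n] fc_exp[of 0 n] by simp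

lemma norm_int_le:
  fixes h :: "real \<Rightarrow> complex"
  assumes "h \<in> borel_measurable T_meas" "AE t in T_meas. cmod (h t) \<le> C"
  shows "cmod (integral\<^sup>L T_meas h) \<le> 2 * pi * C"
proof -
  have [measurable]: "h \<in> borel_measurable T_meas" by fact
  have int: "integrable T_meas h" by (rule integrable_T_bound[OF assms])
  have "cmod (integral\<^sup>L T_meas h) \<le> integral\<^sup>L T_meas (\<lambda>t. cmod (h t))"
    by (rule integral_norm_bound)
  also have "\<dots> \<le> integral\<^sup>L T_meas (\<lambda>t. C)"
    by (rule integral_mono_AE) (use int assms(2) integrable_T_const in auto)
  also have "\<dots> = 2 * pi * C"
    using measure_T by simp
  finally show ?thesis .
qed

lemma norm_fc_le:
  assumes "h \<in> borel_measurable T_meas" "AE t in T_meas. cmod (h t) \<le> C"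
  shows "cmod (fc h n) \<le> C"
proof -
  have [measurable]: "h \<in> borel_measurable T_meas" by fact
  have "cmod (integral\<^sup>L T_meas (\<lambda>t. h t * cis (- (of_int n * t)))) \<le> 2 * pi * C"
    by (rule norm_int_le) (measurable, use assms(2) in \<open>auto simp: norm_mult elim: eventually_mono\<close>)
  moreover have "cmod (complex_of_real (1 / (2 * pi))) = 1 / (2 * pi)"
    by (simp only: norm_of_real) simp
  moreover have pos: "0 \<le> 1 / (2 * pi)" by simp
  ultimately have "cmod (fc h n) \<le> 1 / (2 * pi) * (2 * pi * C)"
    unfolding fc_def norm_mult by (simp only:) (rule mult_left_mono)
  then show ?thesis by simp
qed

section \<open>Hardy space on real parametrisation\<close>

definition H2r :: "(real \<Rightarrow> complex) \<Rightarrow> bool" where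
  "H2r h \<longleftrightarrow> L2r h \<and> (\<forall>n<0. fc h n = 0)"

lemma H2_D_iff: "H2_D f \<longleftrightarrow> H2r (\<lambda>t. f (cis t))"
  by (simp add: H2_D_def H2r_def L2_T_iff fourier_coeff_fc)

lemma H2_Dstar_iff: "H2_Dstar f \<longleftrightarrow> H2r (\<lambda>t. cnj (f (cis t)))"
  by (simp add: H2_Dstar_def H2_D_iff)

lemma H2r_add: "H2r h \<Longrightarrow> H2r k \<Longrightarrow> H2r (\<lambda>t. h t + k t)"
  unfolding H2r_def by (auto simp: L2r_add fc_add L2r_integrable)

lemma H2r_scale: "H2r h \<Longrightarrow> H2r (\<lambda>t. c * h t)"
  unfolding H2r_def by (auto simp: L2r_scale fc_scale)

lemma H2r_diff: "H2r h \<Longrightarrow> H2r k \<Longrightarrow> H2r (\<lambda>t. h t - k t)"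
  unfolding H2r_def by (auto simp: L2r_diff fc_diff L2r_integrable)

lemma L2r_cong:
  assumes "L2r h" "k \<in> borel_measurable T_meas" "AE t in T_meas. h t = k t"
  shows "L2r k"
  unfolding L2r_def
proof
  show "k \<in> borel_measurable T_meas" by fact
  have [measurable]: "k \<in> borel_measurable T_meas" by fact
  show "integrable T_meas (\<lambda>t. (cmod (k t))\<^sup>2)"
    using assms(1) unfolding L2r_def
    by (subst integrable_cong_AE[where g="\<lambda>t. (cmod (h t))\<^sup>2"]) (use assms(3) in \<open>auto elim: eventually_mono\<close>)
qed

lemma H2r_cong:
  assumes "H2r h" "k \<in> borel_measurable T_meas" "AE t in T_meas. h t = k t"
  shows "H2r k"
  using assms L2r_cong fc_cong[of h k] unfolding H2r_def by (metis L2r_meas)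



section \<open>The step\<close>

lemma step_rel_iff:
  "step_rel a b y c d \<longleftrightarrow> (AE t in T_meas.
     c (cis t) = complex_of_real (1 / sqrt (1 + (cmod y)\<^sup>2)) * (a (cis t) + y * cnj (b (cis t))) \<and>
     d (cis t) * cis t = complex_of_real (1 / sqrt (1 + (cmod y)\<^sup>2)) * (b (cis t) - y * cnj (a (cis t))))"
  unfolding step_rel_def ae_T_def pmult_def by simp

lemma Hbar_iff:
  "(a, b) \<in> Hbar \<longleftrightarrow> meas_T a \<and> meas_T b \<and>
     (AE t in T_meas. a (cis t) * cnj (a (cis t)) + b (cis t) * cnj (b (cis t)) = 1) \<and>
     H2r (\<lambda>t. cnj (a (cis t))) \<and> at_inf a \<in> \<real> \<and> Re (at_inf a) > 0 \<and> H2r (\<lambda>t. b (cis t))"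
  unfolding Hbar_def Lset_def ae_T_def by (auto simp: H2_D_iff H2_Dstar_iff)

definition A0 :: "(complex \<Rightarrow> complex) \<Rightarrow> complex" where
  "A0 a = fc (\<lambda>t. cnj (a (cis t))) 0"

definition ystar :: "(complex \<Rightarrow> complex) \<Rightarrow> (complex \<Rightarrow> complex) \<Rightarrow> complex" where
  "ystar a b = fc (\<lambda>t. b (cis t)) 0 / A0 a"

lemma at_inf_A0: "at_inf a = cnj (A0 a)"
  by (simp add: at_inf_fc A0_def)

lemma A0_real:
  assumes "(a, b) \<in> Hbar"
  shows "A0 a = complex_of_real (Re (at_inf a))" "Re (at_inf a) > 0"
proof -
  have "at_inf a \<in> \<real>" using assms by (simp add: Hbar_iff)
  then have "at_inf a = complex_of_real (Re (at_inf a))" by (simp add: complex_is_Real_iff complex_eq_iff)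
  then show "A0 a = complex_of_real (Re (at_inf a))"
    by (metis at_inf_A0 complex_cnj_cnj complex_cnj_complex_of_real)
  show "Re (at_inf a) > 0" using assms by (simp add: Hbar_iff)
qed

lemma unit_bound:
  assumes "a * cnj a + b * cnj b = (1::complex)"
  shows "cmod a \<le> 1"
proof -
  have "complex_of_real ((cmod a)\<^sup>2 + (cmod b)\<^sup>2) = 1"
    using assms by (simp only: of_real_add complex_norm_square)
  then have "(cmod a)\<^sup>2 + (cmod b)\<^sup>2 = 1" using of_real_eq_1_iff by blast
  then have "(cmod a)\<^sup>2 \<le> 1" by (smt (verit) zero_le_power2)
  then show ?thesis by (simp add: power_le_one_iff abs_square_le_1)
qed

lemma Re_at_inf_le_1:
  assumes "(a, b) \<in> Hbar"
  shows "Re (at_inf a) \<le> 1"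
proof -
  have u: "AE t in T_meas. a (cis t) * cnj (a (cis t)) + b (cis t) * cnj (b (cis t)) = 1"
    and m: "meas_T a" using assms by (auto simp: Hbar_iff)
  have "cmod (A0 a) \<le> 1"
    unfolding A0_def
  proof (rule norm_fc_le)
    show "(\<lambda>t. cnj (a (cis t))) \<in> borel_measurable T_meas"
      using m by (simp add: meas_T_def cnj_meas)
    show "AE t in T_meas. cmod (cnj (a (cis t))) \<le> 1"
      using u by eventually_elim (simp add: unit_bound)
  qed
  then show ?thesis using A0_real[OF assms] by simp
qed

lemma scale_cnj_sq: "(complex_of_real r * x) * cnj (complex_of_real r * x) = complex_of_real (r^2) * (x * cnj x)"
  by (simp add: power2_eq_square mult_ac)

lemma unitary_step:
  fixes al be y :: complex
  assumes "al * cnj al + be * cnj be = 1"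
  defines "s \<equiv> sqrt (1 + (cmod y)\<^sup>2)"
  shows "(complex_of_real (1/s) * (al + y * cnj be)) * cnj (complex_of_real (1/s) * (al + y * cnj be))
       + (complex_of_real (1/s) * (be - y * cnj al)) * cnj (complex_of_real (1/s) * (be - y * cnj al)) = 1"
proof -
  have s2: "s\<^sup>2 = 1 + (cmod y)\<^sup>2" unfolding s_def by simp
  have spos: "s > 0" unfolding s_def by (simp add: add_pos_nonneg)
  have yy: "y * cnj y = complex_of_real ((cmod y)\<^sup>2)" by (simp only: complex_norm_square)
  have "(al + y * cnj be) * cnj (al + y * cnj be) + (be - y * cnj al) * cnj (be - y * cnj al)
      = (1 + y * cnj y) * (al * cnj al + be * cnj be)"
    by (simp add: algebra_simps)
  also have "\<dots> = complex_of_real (s\<^sup>2)" using assms(1) s2 yy by simp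
  finally have e: "(al + y * cnj be) * cnj (al + y * cnj be) + (be - y * cnj al) * cnj (be - y * cnj al) = complex_of_real (s\<^sup>2)" .
  have "(complex_of_real (1/s) * (al + y * cnj be)) * cnj (complex_of_real (1/s) * (al + y * cnj be))
       + (complex_of_real (1/s) * (be - y * cnj al)) * cnj (complex_of_real (1/s) * (be - y * cnj al))
      = complex_of_real ((1/s)^2) * ((al + y * cnj be) * cnj (al + y * cnj be) + (be - y * cnj al) * cnj (be - y * cnj al))"
    unfolding scale_cnj_sq by (rule distrib_left[symmetric])
  also have "\<dots> = complex_of_real ((1/s)^2 * s^2)" using e by simp
  also have "\<dots> = 1" using spos by (simp add: power_divide)
  finally show ?thesis .
qed


lemma H2r_L2r: "H2r h \<Longrightarrow> L2r h" by (simp add: H2r_def)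

lemma coeff_calc:
  assumes ab: "(a, b) \<in> Hbar" and fb: "fc (\<lambda>t. b (cis t)) 0 = y * A0 a"
  defines "s \<equiv> sqrt (1 + (cmod y)\<^sup>2)"
  shows "cnj (fc (\<lambda>t. complex_of_real (1/s) * cnj (a (cis t)) + (complex_of_real (1/s) * cnj y) * b (cis t)) 0)
      = complex_of_real (Re (at_inf a) * s)"
proof -
  have Ha: "H2r (\<lambda>t. cnj (a (cis t)))" and Hb: "H2r (\<lambda>t. b (cis t))"
    using ab by (auto simp: Hbar_iff)
  have i1: "integrable T_meas (\<lambda>t. complex_of_real (1/s) * cnj (a (cis t)))"
    by (rule L2r_integrable[OF L2r_scale[OF H2r_L2r[OF Ha]]])
  have i2: "integrable T_meas (\<lambda>t. (complex_of_real (1/s) * cnj y) * b (cis t))"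
    by (rule L2r_integrable[OF L2r_scale[OF H2r_L2r[OF Hb]]])
  have spos: "s > 0" unfolding s_def by (simp add: add_pos_nonneg)
  have ss: "(1 + (cmod y)\<^sup>2) / s = s"
    using spos unfolding s_def by (simp add: field_simps)
  have "fc (\<lambda>t. complex_of_real (1/s) * cnj (a (cis t)) + (complex_of_real (1/s) * cnj y) * b (cis t)) 0
      = complex_of_real (1/s) * A0 a + (complex_of_real (1/s) * cnj y) * (y * A0 a)"
    unfolding fc_add[OF i1 i2] fc_scale A0_def[symmetric] fb ..
  also have "\<dots> = complex_of_real (1/s) * A0 a * (1 + y * cnj y)"
    by (simp add: algebra_simps)
  also have "\<dots> = complex_of_real (Re (at_inf a) * ((1 + (cmod y)\<^sup>2) / s))"
    unfolding A0_real(1)[OF ab] complex_norm_square[symmetric] by simp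
  also have "\<dots> = complex_of_real (Re (at_inf a) * s)" by (simp only: ss)
  finally show ?thesis by simp
qed

lemma step_exists:
  assumes ab: "(a, b) \<in> Hbar"
  shows "\<exists>c d. (c, d) \<in> Hbar \<and> step_rel a b (ystar a b) c d"
proof -
  define y where "y = ystar a b"
  define s where "s = sqrt (1 + (cmod y)\<^sup>2)"
  have spos: "s > 0" unfolding s_def by (simp add: add_pos_nonneg)
  have ma: "meas_T a" and mb: "meas_T b"
    and u: "AE t in T_meas. a (cis t) * cnj (a (cis t)) + b (cis t) * cnj (b (cis t)) = 1"
    and Ha: "H2r (\<lambda>t. cnj (a (cis t)))" and Hb: "H2r (\<lambda>t. b (cis t))"
    using ab by (auto simp: Hbar_iff)
  have [measurable]: "(\<lambda>t. a (cis t)) \<in> borel_measurable T_meas" "(\<lambda>t. b (cis t)) \<in> borel_measurable T_meas"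
    using ma mb by (auto simp: meas_T_def)
  have A0pos: "A0 a \<noteq> 0" using A0_real[OF ab] by simp
  have fb: "fc (\<lambda>t. b (cis t)) 0 = y * A0 a"
    using A0pos unfolding y_def ystar_def by simp
  define c where "c z = complex_of_real (1/s) * (a z + y * star_fun b z)" for z
  define d where "d z = complex_of_real (1/s) * (b z - y * star_fun a z) / z" for z
  have c_cis: "c (cis t) = complex_of_real (1/s) * (a (cis t) + y * cnj (b (cis t)))" for t
    by (simp add: c_def)
  have d_cis: "d (cis t) = complex_of_real (1/s) * (b (cis t) - y * cnj (a (cis t))) * cis (- t)" for t
    by (simp add: d_def divide_inverse)
  have step: "step_rel a b y c d"
    unfolding step_rel_iff s_def[symmetric]
    by (intro AE_I2) (simp add: c_cis d_cis mult.assoc cis_mult)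
  have mc: "meas_T c" unfolding meas_T_def c_cis by measurable
  have md: "meas_T d" unfolding meas_T_def d_cis by measurable
  have uc: "AE t in T_meas. c (cis t) * cnj (c (cis t)) + d (cis t) * cnj (d (cis t)) = 1"
    using u
  proof eventually_elim
    case (elim t)
    have "cis (- t) * cnj (cis (- t)) = 1" by (simp add: cis_cnj cis_mult)
    then have "d (cis t) * cnj (d (cis t)) = (complex_of_real (1/s) * (b (cis t) - y * cnj (a (cis t))))
       * cnj (complex_of_real (1/s) * (b (cis t) - y * cnj (a (cis t))))"
      unfolding d_cis complex_cnj_mult by (simp add: mult_ac)
    then show ?case
      using unitary_step[OF elim, of y] unfolding c_cis s_def by simp
  qed
  have cstar: "(\<lambda>t. cnj (c (cis t))) = (\<lambda>t. complex_of_real (1/s) * cnj (a (cis t)) + (complex_of_real (1/s) * cnj y) * b (cis t))"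
    by (rule ext) (simp add: c_cis algebra_simps)
  have Hc: "H2r (\<lambda>t. cnj (c (cis t)))"
    unfolding cstar by (intro H2r_add H2r_scale Ha Hb)
  have atc: "at_inf c = complex_of_real (Re (at_inf a) * s)"
  proof -
    have "at_inf c = cnj (fc (\<lambda>t. cnj (c (cis t))) 0)" by (rule at_inf_fc)
    also have "\<dots> = complex_of_real (Re (at_inf a) * s)"
      unfolding cstar s_def by (rule coeff_calc[OF ab fb])
    finally show ?thesis .
  qed
  define h where "h t = complex_of_real (1/s) * (b (cis t) - y * cnj (a (cis t)))" for t
  have [measurable]: "h \<in> borel_measurable T_meas" unfolding h_def by measurable
  have Hh: "H2r h" unfolding h_def by (intro H2r_scale H2r_diff Hb Ha)
  have h0: "fc h 0 = 0"
  proof -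
    have i1: "integrable T_meas (\<lambda>t. b (cis t))" by (rule L2r_integrable[OF H2r_L2r[OF Hb]])
    have i2: "integrable T_meas (\<lambda>t. y * cnj (a (cis t)))" by (rule L2r_integrable[OF L2r_scale[OF H2r_L2r[OF Ha]]])
    have "fc h 0 = complex_of_real (1/s) * (fc (\<lambda>t. b (cis t)) 0 - y * A0 a)"
      unfolding h_def fc_scale fc_diff[OF i1 i2] A0_def ..
    then show ?thesis using fb by simp
  qed
  have dd: "(\<lambda>t. d (cis t)) = (\<lambda>t. h t * cis (- t))"
    by (rule ext) (simp add: d_cis h_def)
  have Hd: "H2r (\<lambda>t. d (cis t))"
    unfolding dd H2r_def
  proof
    show "L2r (\<lambda>t. h t * cis (- t))"
      by (rule L2r_mult_bounded[OF H2r_L2r[OF Hh], where C=1]) (auto intro: AE_I2)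
    show "\<forall>n<0. fc (\<lambda>t. h t * cis (- t)) n = 0"
    proof (intro allI impI)
      fix n :: int assume "n < 0"
      then consider "n + 1 < 0" | "n + 1 = 0" by linarith
      then show "fc (\<lambda>t. h t * cis (- t)) n = 0"
        unfolding fc_shift_div using Hh h0 unfolding H2r_def by cases auto
    qed
  qed
  have "(c, d) \<in> Hbar"
    unfolding Hbar_iff using mc md uc Hc Hd atc spos A0_real(2)[OF ab]
    by (auto simp: complex_is_Real_iff)
  then show ?thesis using step unfolding y_def by blast
qed


lemma step_unique:
  assumes ab: "(a, b) \<in> Hbar" and cd: "(c, d) \<in> Hbar" and st: "step_rel a b y c d"
  shows "y = ystar a b" "Re (at_inf c) = Re (at_inf a) * sqrt (1 + (cmod y)\<^sup>2)"
proof -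
  define s where "s = sqrt (1 + (cmod y)\<^sup>2)"
  have spos: "s > 0" unfolding s_def by (simp add: add_pos_nonneg)
  have ma: "meas_T a" and mb: "meas_T b"
    and Ha: "H2r (\<lambda>t. cnj (a (cis t)))" and Hb: "H2r (\<lambda>t. b (cis t))"
    using ab by (auto simp: Hbar_iff)
  have mc: "meas_T c" and md: "meas_T d" and Hd: "H2r (\<lambda>t. d (cis t))"
    using cd by (auto simp: Hbar_iff)
  have [measurable]: "(\<lambda>t. a (cis t)) \<in> borel_measurable T_meas" "(\<lambda>t. b (cis t)) \<in> borel_measurable T_meas"
     "(\<lambda>t. c (cis t)) \<in> borel_measurable T_meas" "(\<lambda>t. d (cis t)) \<in> borel_measurable T_meas"
    using ma mb mc md by (auto simp: meas_T_def)
  have [measurable]: "(\<lambda>t. cis t) \<in> borel_measurable T_meas" using cis_meas by simp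
  have AEs: "AE t in T_meas.
     c (cis t) = complex_of_real (1 / s) * (a (cis t) + y * cnj (b (cis t))) \<and>
     d (cis t) * cis t = complex_of_real (1 / s) * (b (cis t) - y * cnj (a (cis t)))"
    using st unfolding step_rel_iff s_def .
  have i1: "integrable T_meas (\<lambda>t. b (cis t))" by (rule L2r_integrable[OF H2r_L2r[OF Hb]])
  have i2: "integrable T_meas (\<lambda>t. y * cnj (a (cis t)))" by (rule L2r_integrable[OF L2r_scale[OF H2r_L2r[OF Ha]]])
  have "fc (\<lambda>t. d (cis t) * cis t) 0 = fc (\<lambda>t. complex_of_real (1 / s) * (b (cis t) - y * cnj (a (cis t)))) 0"
    by (rule fc_cong) (measurable, use AEs in \<open>auto elim: eventually_mono\<close>)
  moreover have "fc (\<lambda>t. d (cis t) * cis t) 0 = 0"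
    unfolding fc_shift_mult using Hd unfolding H2r_def by simp
  moreover have "fc (\<lambda>t. complex_of_real (1 / s) * (b (cis t) - y * cnj (a (cis t)))) 0
     = complex_of_real (1/s) * (fc (\<lambda>t. b (cis t)) 0 - y * A0 a)"
    unfolding fc_scale fc_diff[OF i1 i2] A0_def ..
  ultimately have fb: "fc (\<lambda>t. b (cis t)) 0 = y * A0 a" using spos by simp
  have A0pos: "A0 a \<noteq> 0" using A0_real[OF ab] by simp
  then show "y = ystar a b" unfolding ystar_def fb by simp
  have "at_inf c = cnj (fc (\<lambda>t. cnj (c (cis t))) 0)" by (rule at_inf_fc)
  also have "fc (\<lambda>t. cnj (c (cis t))) 0 = fc (\<lambda>t. complex_of_real (1/s) * cnj (a (cis t)) + (complex_of_real (1/s) * cnj y) * b (cis t)) 0"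
    by (rule fc_cong) (measurable, use AEs in \<open>auto elim: eventually_mono simp: algebra_simps\<close>)
  also have "cnj \<dots> = complex_of_real (Re (at_inf a) * s)"
    unfolding s_def by (rule coeff_calc[OF ab fb])
  finally show "Re (at_inf c) = Re (at_inf a) * sqrt (1 + (cmod y)\<^sup>2)" unfolding s_def by simp
qed



lemma one_plus_sum_le_prod:
  fixes x :: "nat \<Rightarrow> real"
  assumes "\<And>n. x n \<ge> 0"
  shows "1 + (\<Sum>n<N. x n) \<le> (\<Prod>n<N. 1 + x n)"
proof (induction N)
  case 0 then show ?case by simp
next
  case (Suc N)
  have p: "(\<Prod>n<N. 1 + x n) \<ge> 1" using assms by (intro prod_ge_1) auto
  have "1 + (\<Sum>n<Suc N. x n) = (1 + (\<Sum>n<N. x n)) + x N" by simp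
  also have "\<dots> \<le> (\<Prod>n<N. 1 + x n) + x N" using Suc by simp
  also have "\<dots> \<le> (\<Prod>n<N. 1 + x n) + (\<Prod>n<N. 1 + x n) * x N"
    using p assms[of N] by (simp add: mult_le_cancel_right1)
  also have "\<dots> = (\<Prod>n<Suc N. 1 + x n)" by (simp add: algebra_simps)
  finally show ?case .
qed

lemma seq_part:
  fixes al x :: "nat \<Rightarrow> real"
  assumes alpos: "\<And>n. al n > 0" and alle: "\<And>n. al n \<le> 1" and xnn: "\<And>n. x n \<ge> 0"
    and rec: "\<And>n. al (Suc n) = al n * sqrt (1 + x n)"
  shows "summable x" "al 0 \<le> (\<Prod>n. 1 / sqrt (1 + x n))"
    "\<And>g. g < 1 \<Longrightarrow> (\<forall>N. al N \<le> g) \<Longrightarrow> al 0 < (\<Prod>n. 1 / sqrt (1 + x n))"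
proof -
  define s where "s n = sqrt (1 + x n)" for n
  have s1: "s n \<ge> 1" for n unfolding s_def using xnn[of n] by simp
  have spos: "s n > 0" for n using s1[of n] by simp
  define P where "P N = (\<Prod>n<N. 1 / s n)" for N
  have Ppos: "P N > 0" for N unfolding P_def using spos by (simp add: prod_pos)
  have eq: "al 0 = al N * P N" for N
  proof (induction N)
    case 0 then show ?case by (simp add: P_def)
  next
    case (Suc N)
    have "al N * P N = (al N * s N) * (P N * (1 / s N))" using spos[of N] by (simp add: field_simps)
    also have "\<dots> = al (Suc N) * P (Suc N)" using rec[of N] by (simp add: P_def s_def)
    finally show ?case using Suc by simp
  qed
  have Pge: "al 0 \<le> P N" for N
    using eq[of N] alle[of N] Ppos[of N] by (simp add: mult_le_cancel_right1)
  have dec: "decseq P"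
  proof (rule decseq_SucI)
    fix N
    have "P (Suc N) = P N * (1 / s N)" by (simp add: P_def)
    also have "\<dots> \<le> P N" using Ppos[of N] s1[of N] by (simp add: mult_le_cancel_left1 field_simps)
    finally show "P (Suc N) \<le> P N" .
  qed
  obtain L where L: "P \<longlonglongrightarrow> L" "\<forall>i. L \<le> P i"
    using decseq_convergent[OF dec, of "al 0"] Pge by blast
  have aL: "al 0 \<le> L" by (rule LIMSEQ_le_const[OF L(1)]) (use Pge in auto)
  have Lpos: "L > 0" using aL alpos[of 0] by simp
  have hp: "(\<lambda>n. 1 / sqrt (1 + x n)) has_prod L"
    unfolding has_prod_def raw_has_prod_def
  proof (intro disjI1 conjI)
    have "(\<lambda>n. \<Prod>i\<le>n. 1 / sqrt (1 + x (i + 0))) = (\<lambda>n. P (Suc n))"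
      by (rule ext) (simp add: P_def s_def lessThan_Suc_atMost)
    then show "(\<lambda>n. \<Prod>i\<le>n. 1 / sqrt (1 + x (i + 0))) \<longlonglongrightarrow> L"
      using L(1) by (simp add: LIMSEQ_Suc)
    show "L \<noteq> 0" using Lpos by simp
  qed
  then have prodL: "(\<Prod>n. 1 / sqrt (1 + x n)) = L" by (simp add: has_prod_unique[symmetric])
  show "al 0 \<le> (\<Prod>n. 1 / sqrt (1 + x n))" using aL prodL by simp
  show "summable x"
  proof (rule summableI_nonneg_bounded[where x="1 / (al 0)\<^sup>2"])
    show "0 \<le> x n" for n by (rule xnn)
    fix N
    have "(\<Prod>n<N. s n) * P N = (\<Prod>n<N. s n * (1 / s n))" unfolding P_def by (simp only: prod.distrib[symmetric])
    also have "\<dots> = (\<Prod>n<N. (1::real))" by (rule prod.cong) (use spos in \<open>auto simp: less_imp_neq[symmetric]\<close>)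
    also have "\<dots> = 1" by simp
    finally have sp: "(\<Prod>n<N. s n) = 1 / P N" using Ppos[of N] by (simp add: field_simps)
    have "(\<Prod>n<N. 1 + x n) = (\<Prod>n<N. (s n)\<^sup>2)"
      by (rule prod.cong) (auto simp: s_def xnn add_nonneg_nonneg)
    also have "\<dots> = (\<Prod>n<N. s n)\<^sup>2" by (simp add: prod_power_distrib)
    also have "\<dots> = (1 / P N)\<^sup>2" by (simp add: sp)
    also have "\<dots> \<le> (1 / al 0)\<^sup>2"
      using Pge[of N] alpos[of 0] by (intro power_mono) (auto simp: frac_le)
    finally have "(\<Prod>n<N. 1 + x n) \<le> 1 / (al 0)\<^sup>2" by (simp add: power_divide)
    then show "(\<Sum>i<N. x i) \<le> 1 / (al 0)\<^sup>2"
      using one_plus_sum_le_prod[of x N, OF xnn] by simp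
  qed
  fix g assume g1: "g < 1" and gb: "\<forall>N. al N \<le> g"
  have "al 0 \<le> g * L"
  proof (rule LIMSEQ_le_const[OF tendsto_mult_left[OF L(1), of g]])
    show "\<exists>N. \<forall>n\<ge>N. al 0 \<le> g * P n"
      using eq gb Ppos by (metis mult_right_mono less_imp_le)
  qed
  also have "\<dots> < L" using g1 Lpos by simp
  finally show "al 0 < (\<Prod>n. 1 / sqrt (1 + x n))" using prodL by simp
qed



section \<open>Trigonometric polynomials and Bessel\<close>

definition tp :: "int set \<Rightarrow> (int \<Rightarrow> complex) \<Rightarrow> real \<Rightarrow> complex" where
  "tp F c t = (\<Sum>n\<in>F. c n * cis (of_int n * t))"

lemma tp_cont: "continuous_on UNIV (tp F c)"
  unfolding tp_def by (intro continuous_intros)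

lemma tp_meas [measurable]: "tp F c \<in> borel_measurable T_meas"
  by (rule cont_meas_T[OF tp_cont])

lemma tp_bound: "cmod (tp F c t) \<le> (\<Sum>n\<in>F. cmod (c n))"
  unfolding tp_def by (rule order_trans[OF norm_sum]) (simp add: norm_mult)

lemma tp_L2r: "L2r (tp F c)"
  by (rule L2r_bounded[OF tp_meas, where C="\<Sum>n\<in>F. cmod (c n)"]) (simp add: tp_bound)

lemma fc_sum:
  assumes "finite F" "\<And>i. i \<in> F \<Longrightarrow> integrable T_meas (g i)"
  shows "fc (\<lambda>t. \<Sum>i\<in>F. g i t) n = (\<Sum>i\<in>F. fc (g i) n)"
  using assms
proof (induction F rule: finite_induct)
  case empty
  then show ?case using fc_const[of 0 n] by simp
next
  case (insert x F)
  have i1: "integrable T_meas (g x)" using insert by simp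
  have i2: "integrable T_meas (\<lambda>t. \<Sum>i\<in>F. g i t)" using insert by (intro Bochner_Integration.integrable_sum) auto
  show ?case using insert fc_add[OF i1 i2] by simp
qed

lemma fc_tp:
  assumes "finite F"
  shows "fc (tp F c) n = (if n \<in> F then c n else 0)"
proof -
  have "fc (tp F c) n = (\<Sum>i\<in>F. fc (\<lambda>t. c i * cis (of_int i * t)) n)"
    unfolding tp_def
    by (rule fc_sum[OF assms]) (rule integrable_T_bound[where C="cmod (c _)"], measurable, auto simp: norm_mult)
  also have "\<dots> = (\<Sum>i\<in>F. if i = n then c i else 0)"
    by (intro sum.cong refl) (simp add: fc_scale fc_exp)
  also have "\<dots> = (if n \<in> F then c n else 0)"
    using assms by (simp add: sum.delta)
  finally show ?thesis .
qed

lemma int_f_cis: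
  "integral\<^sup>L T_meas (\<lambda>t. f t * cis (of_int n * t)) = complex_of_real (2*pi) * fc f (- n)"
  unfolding fc_def by simp

lemma int_mult_tp:
  assumes f: "integrable T_meas f" and F: "finite F"
  shows "integral\<^sup>L T_meas (\<lambda>t. f t * tp F c t) = complex_of_real (2*pi) * (\<Sum>n\<in>F. c n * fc f (- n))"
proof -
  have "(\<lambda>t. f t * tp F c t) = (\<lambda>t. \<Sum>n\<in>F. c n * (f t * cis (of_int n * t)))"
    by (rule ext) (simp add: tp_def sum_distrib_left mult_ac)
  then have "integral\<^sup>L T_meas (\<lambda>t. f t * tp F c t) = (\<Sum>n\<in>F. integral\<^sup>L T_meas (\<lambda>t. c n * (f t * cis (of_int n * t))))"
    using integrable_mult_cis[OF f] by (simp add: Bochner_Integration.integral_sum)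
  also have "\<dots> = (\<Sum>n\<in>F. c n * (complex_of_real (2*pi) * fc f (- n)))"
    by (simp add: int_f_cis)
  finally show ?thesis by (simp add: sum_distrib_left mult_ac)
qed

lemma int_mult_cnj_tp:
  assumes f: "integrable T_meas f" and F: "finite F"
  shows "integral\<^sup>L T_meas (\<lambda>t. f t * cnj (tp F c t)) = complex_of_real (2*pi) * (\<Sum>n\<in>F. cnj (c n) * fc f n)"
proof -
  have "(\<lambda>t. f t * cnj (tp F c t)) = (\<lambda>t. \<Sum>n\<in>F. cnj (c n) * (f t * cis (- (of_int n * t))))"
    by (rule ext) (simp add: tp_def sum_distrib_left mult_ac cis_cnj)
  then have "integral\<^sup>L T_meas (\<lambda>t. f t * cnj (tp F c t)) = (\<Sum>n\<in>F. integral\<^sup>L T_meas (\<lambda>t. cnj (c n) * (f t * cis (- (of_int n * t)))))"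
    using integrable_mult_cis'[OF f] by (simp add: Bochner_Integration.integral_sum)
  also have "\<dots> = (\<Sum>n\<in>F. cnj (c n) * (complex_of_real (2*pi) * fc f n))"
    by (simp add: fc_def)
  finally show ?thesis by (simp add: sum_distrib_left mult_ac)
qed


lemma L2r_cnj_eq: "L2r h \<Longrightarrow> L2r (\<lambda>t. cnj (h t))" by (rule L2r_cnj)

lemma int4:
  fixes X Y Z W :: "real \<Rightarrow> complex"
  assumes "integrable M X" "integrable M Y" "integrable M Z" "integrable M W"
  shows "integral\<^sup>L M (\<lambda>t. X t - Y t - Z t + W t) = integral\<^sup>L M X - integral\<^sup>L M Y - integral\<^sup>L M Z + integral\<^sup>L M W"
  using assms by simp

lemma bessel:
  assumes f: "L2r f" and F: "finite F"
  shows "2 * pi * (\<Sum>n\<in>F. (cmod (fc f n))\<^sup>2) \<le> integral\<^sup>L T_meas (\<lambda>t. (cmod (f t))\<^sup>2)"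
proof -
  define c where "c = fc f"
  define s where "s = tp F c"
  define S where "S = (\<Sum>n\<in>F. (cmod (c n))\<^sup>2)"
  have fi: "integrable T_meas f" by (rule L2r_integrable[OF f])
  have sL: "L2r s" unfolding s_def by (rule tp_L2r)
  have si: "integrable T_meas s" by (rule L2r_integrable[OF sL])
  have fm [measurable]: "f \<in> borel_measurable T_meas" using f by (simp add: L2r_def)
  have sm [measurable]: "s \<in> borel_measurable T_meas" unfolding s_def by measurable
  have cS: "(\<Sum>n\<in>F. cnj (c n) * c n) = complex_of_real S"
    unfolding S_def of_real_sum by (intro sum.cong refl) (simp only: complex_norm_square mult.commute)
  have i1: "integrable T_meas (\<lambda>t. f t * cnj (f t))" by (rule integrable_mult_L2[OF f L2r_cnj[OF f]])
  have i2: "integrable T_meas (\<lambda>t. f t * cnj (s t))" by (rule integrable_mult_L2[OF f L2r_cnj[OF sL]])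
  have i3: "integrable T_meas (\<lambda>t. cnj (f t * cnj (s t)))"
    using integrable_mult_L2[OF L2r_cnj[OF f] sL] by simp
  have i4: "integrable T_meas (\<lambda>t. s t * cnj (s t))" by (rule integrable_mult_L2[OF sL L2r_cnj[OF sL]])
  have I1: "integral\<^sup>L T_meas (\<lambda>t. f t * cnj (f t)) = complex_of_real (integral\<^sup>L T_meas (\<lambda>t. (cmod (f t))\<^sup>2))"
    unfolding complex_norm_square[symmetric] by (rule integral_complex_of_real)
  have I2: "integral\<^sup>L T_meas (\<lambda>t. f t * cnj (s t)) = complex_of_real (2 * pi * S)"
    unfolding s_def int_mult_cnj_tp[OF fi F] c_def[symmetric] cS by simp
  have I3: "integral\<^sup>L T_meas (\<lambda>t. cnj (f t * cnj (s t))) = complex_of_real (2 * pi * S)"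
    by (simp only: Bochner_Integration.integral_cnj I2 complex_cnj_complex_of_real)
  have I4: "integral\<^sup>L T_meas (\<lambda>t. s t * cnj (s t)) = complex_of_real (2 * pi * S)"
  proof -
    have "integral\<^sup>L T_meas (\<lambda>t. s t * cnj (s t)) = complex_of_real (2*pi) * (\<Sum>n\<in>F. cnj (c n) * fc s n)"
      unfolding s_def by (rule int_mult_cnj_tp[OF si[unfolded s_def] F])
    also have "(\<Sum>n\<in>F. cnj (c n) * fc s n) = (\<Sum>n\<in>F. cnj (c n) * c n)"
      unfolding s_def by (intro sum.cong refl) (simp add: fc_tp[OF F])
    finally show ?thesis unfolding cS by simp
  qed
  have pw: "complex_of_real ((cmod (f t - s t))\<^sup>2) = f t * cnj (f t) - f t * cnj (s t) - cnj (f t * cnj (s t)) + s t * cnj (s t)" for t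
    unfolding complex_norm_square by (simp add: algebra_simps)
  have "complex_of_real (integral\<^sup>L T_meas (\<lambda>t. (cmod (f t - s t))\<^sup>2))
      = integral\<^sup>L T_meas (\<lambda>t. f t * cnj (f t) - f t * cnj (s t) - cnj (f t * cnj (s t)) + s t * cnj (s t))"
    unfolding integral_complex_of_real[symmetric] pw ..
  also have "\<dots> = complex_of_real (integral\<^sup>L T_meas (\<lambda>t. (cmod (f t))\<^sup>2) - 2 * pi * S)"
    unfolding int4[OF i1 i2 i3 i4] I1 I2 I3 I4 by simp
  finally have e: "integral\<^sup>L T_meas (\<lambda>t. (cmod (f t - s t))\<^sup>2) = integral\<^sup>L T_meas (\<lambda>t. (cmod (f t))\<^sup>2) - 2 * pi * S"
    using of_real_eq_iff by blast
  have "0 \<le> integral\<^sup>L T_meas (\<lambda>t. (cmod (f t - s t))\<^sup>2)" by simp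
  then show ?thesis using e unfolding S_def c_def by simp
qed



definition trigpoly :: "(real \<Rightarrow> complex) \<Rightarrow> bool" where
  "trigpoly p \<longleftrightarrow> (\<exists>F c. finite F \<and> p = tp F c)"

lemma tp_restrict:
  assumes "finite H" "F \<subseteq> H"
  shows "tp F c t = (\<Sum>n\<in>H. (if n \<in> F then c n else 0) * cis (of_int n * t))"
proof -
  have "(\<Sum>n\<in>H. (if n \<in> F then c n else 0) * cis (of_int n * t)) = (\<Sum>n\<in>H. if n \<in> F then c n * cis (of_int n * t) else 0)"
    by (intro sum.cong refl) auto
  also have "\<dots> = (\<Sum>n\<in>H \<inter> F. c n * cis (of_int n * t))"
    using assms(1) by (simp add: sum.inter_restrict)
  also have "H \<inter> F = F" using assms(2) by auto
  finally show ?thesis unfolding tp_def by simp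
qed

lemma trigpoly_add: "trigpoly p \<Longrightarrow> trigpoly q \<Longrightarrow> trigpoly (\<lambda>t. p t + q t)"
proof -
  assume "trigpoly p" "trigpoly q"
  then obtain F c G d where F: "finite F" "p = tp F c" and G: "finite G" "q = tp G d"
    unfolding trigpoly_def by blast
  define e where "e n = (if n \<in> F then c n else 0) + (if n \<in> G then d n else 0)" for n
  have "(\<lambda>t. p t + q t) = tp (F \<union> G) e"
  proof
    fix t
    have "p t + q t = (\<Sum>n\<in>F \<union> G. (if n \<in> F then c n else 0) * cis (of_int n * t))
        + (\<Sum>n\<in>F \<union> G. (if n \<in> G then d n else 0) * cis (of_int n * t))"
      using F G by (simp add: tp_restrict[of "F \<union> G"])
    also have "\<dots> = tp (F \<union> G) e t"
      unfolding tp_def e_def by (simp add: sum.distrib[symmetric] distrib_right)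
    finally show "p t + q t = tp (F \<union> G) e t" .
  qed
  then show ?thesis unfolding trigpoly_def using F G by blast
qed

lemma trigpoly_scale: "trigpoly p \<Longrightarrow> trigpoly (\<lambda>t. a * p t)"
proof -
  assume "trigpoly p"
  then obtain F c where F: "finite F" "p = tp F c" unfolding trigpoly_def by blast
  have "(\<lambda>t. a * p t) = tp F (\<lambda>n. a * c n)"
    unfolding F(2) tp_def by (simp add: sum_distrib_left mult.assoc)
  then show ?thesis unfolding trigpoly_def using F by blast
qed

lemma trigpoly_const: "trigpoly (\<lambda>t. a)"
proof -
  have "(\<lambda>t. a) = tp {0} (\<lambda>n. a)" unfolding tp_def by simp
  then show ?thesis unfolding trigpoly_def by blast
qed

lemma trigpoly_exp: "trigpoly (\<lambda>t. cis (of_int n * t))"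
proof -
  have "(\<lambda>t. cis (of_int n * t)) = tp {n} (\<lambda>n. 1)" unfolding tp_def by simp
  then show ?thesis unfolding trigpoly_def by blast
qed

lemma cis_int_mult: "cis (of_int n * t) * cis (of_int m * t) = cis (of_int (n + m) * t)"
  by (simp add: cis_mult distrib_right)

lemma trigpoly_mult: "trigpoly p \<Longrightarrow> trigpoly q \<Longrightarrow> trigpoly (\<lambda>t. p t * q t)"
proof -
  assume "trigpoly p" "trigpoly q"
  then obtain F c G d where F: "finite F" "p = tp F c" and G: "finite G" "q = tp G d"
    unfolding trigpoly_def by blast
  define S where "S = F \<times> G"
  define s where "s x = fst x + snd x" for x :: "int \<times> int"
  define e where "e k = (\<Sum>x\<in>{x \<in> S. s x = k}. c (fst x) * d (snd x))" for k
  have fS: "finite S" unfolding S_def using F G by simp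
  have "(\<lambda>t. p t * q t) = tp (s ` S) e"
  proof
    fix t
    define f where "f x = c (fst x) * d (snd x) * cis (of_int (s x) * t)" for x
    have "p t * q t = (\<Sum>n\<in>F. \<Sum>m\<in>G. c n * d m * cis (of_int (n + m) * t))"
      unfolding F(2) G(2) tp_def sum_product
    proof (intro sum.cong refl)
      fix n m
      have "c n * cis (of_int n * t) * (d m * cis (of_int m * t)) = c n * d m * (cis (of_int n * t) * cis (of_int m * t))"
        by (simp only: mult_ac)
      then show "c n * cis (of_int n * t) * (d m * cis (of_int m * t)) = c n * d m * cis (of_int (n + m) * t)"
        by (simp only: cis_int_mult)
    qed
    also have "\<dots> = (\<Sum>x\<in>S. f x)"
      unfolding S_def f_def s_def sum.cartesian_product by (simp add: case_prod_beta)
    also have "\<dots> = (\<Sum>k\<in>s ` S. \<Sum>x\<in>{x \<in> S. s x = k}. f x)"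
      by (rule sum.image_gen[OF fS])
    also have "\<dots> = (\<Sum>k\<in>s ` S. e k * cis (of_int k * t))"
    proof (intro sum.cong refl)
      fix k assume "k \<in> s ` S"
      have "(\<Sum>x\<in>{x \<in> S. s x = k}. f x) = (\<Sum>x\<in>{x \<in> S. s x = k}. c (fst x) * d (snd x) * cis (of_int k * t))"
        by (intro sum.cong refl) (simp add: f_def)
      also have "\<dots> = e k * cis (of_int k * t)"
        unfolding e_def by (simp add: sum_distrib_right)
      finally show "(\<Sum>x\<in>{x \<in> S. s x = k}. f x) = e k * cis (of_int k * t)" .
    qed
    finally show "p t * q t = tp (s ` S) e t" unfolding tp_def .
  qed
  then show ?thesis unfolding trigpoly_def using fS by blast
qed

lemma trigpoly_cos: "trigpoly (\<lambda>t. complex_of_real (cos t))"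
proof -
  have "(\<lambda>t. complex_of_real (cos t)) = (\<lambda>t. (1/2) * cis (of_int 1 * t) + (1/2) * cis (of_int (-1) * t))"
    by (rule ext) (simp add: cis.code complex_eq_iff)
  then show ?thesis by (simp only:) (intro trigpoly_add trigpoly_scale trigpoly_exp)
qed

lemma trigpoly_sin: "trigpoly (\<lambda>t. complex_of_real (sin t))"
proof -
  have "(\<lambda>t. complex_of_real (sin t)) = (\<lambda>t. (- \<i>/2) * cis (of_int 1 * t) + (\<i>/2) * cis (of_int (-1) * t))"
    by (rule ext) (simp add: cis.code complex_eq_iff)
  then show ?thesis by (simp only:) (intro trigpoly_add trigpoly_scale trigpoly_exp)
qed

lemma real_poly_trig:
  fixes q :: "complex \<Rightarrow> real"
  assumes "real_polynomial_function q"
  shows "trigpoly (\<lambda>t. complex_of_real (q (cis t)))"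
  using assms
proof (induction q rule: real_polynomial_function.induct)
  case (linear f)
  then interpret bounded_linear f .
  have fz: "f z = Re z * f 1 + Im z * f \<i>" for z
  proof -
    have "z = Re z *\<^sub>R 1 + Im z *\<^sub>R \<i>" by (simp add: complex_eq_iff)
    then have "f z = f (Re z *\<^sub>R 1 + Im z *\<^sub>R \<i>)" by simp
    also have "\<dots> = Re z * f 1 + Im z * f \<i>" by (simp add: add scale)
    finally show ?thesis .
  qed
  have "(\<lambda>t. complex_of_real (f (cis t))) = (\<lambda>t. complex_of_real (f 1) * complex_of_real (cos t) + complex_of_real (f \<i>) * complex_of_real (sin t))"
  proof
    fix t
    show "complex_of_real (f (cis t)) = complex_of_real (f 1) * complex_of_real (cos t) + complex_of_real (f \<i>) * complex_of_real (sin t)"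
      unfolding fz[of "cis t"] by (simp add: mult.commute)
  qed
  then show ?case by (simp only:) (intro trigpoly_add trigpoly_scale trigpoly_cos trigpoly_sin)
next
  case (const c)
  then show ?case by (rule trigpoly_const)
next
  case (add f g)
  then show ?case by (simp add: trigpoly_add)
next
  case (mult f g)
  then show ?case by (simp add: trigpoly_mult)
qed

lemma poly_trig:
  fixes P :: "complex \<Rightarrow> complex"
  assumes "polynomial_function P"
  shows "trigpoly (\<lambda>t. P (cis t))"
proof -
  have r: "real_polynomial_function (Re \<circ> P)" and i: "real_polynomial_function (Im \<circ> P)"
    using assms unfolding polynomial_function_def by (auto intro: bounded_linear_Re bounded_linear_Im)
  have "(\<lambda>t. P (cis t)) = (\<lambda>t. complex_of_real ((Re \<circ> P) (cis t)) + \<i> * complex_of_real ((Im \<circ> P) (cis t)))"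
    by (rule ext) (simp add: complex_eq_iff)
  then show ?thesis
    by (simp only:) (intro trigpoly_add trigpoly_scale real_poly_trig r i)
qed



lemma cis_image: "cis ` {0..2*pi} = sphere 0 1"
proof
  show "cis ` {0..2*pi} \<subseteq> sphere 0 1" by auto
  show "sphere 0 1 \<subseteq> cis ` {0..2*pi}"
  proof
    fix z :: complex assume "z \<in> sphere 0 1"
    then have "norm z = 1" by simp
    then have "z = cis (Arg2pi z)"
      using complex_norm_eq_1_exp[of z] by (simp add: cis_conv_exp mult.commute)
    moreover have "Arg2pi z \<in> {0..2*pi}" using Arg2pi[of z] by auto
    ultimately show "z \<in> cis ` {0..2*pi}" by blast
  qed
qed

lemma Arg2pi_cis: "0 \<le> t \<Longrightarrow> t < 2*pi \<Longrightarrow> Arg2pi (cis t) = t"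
  by (rule Arg2pi_unique[of 1]) (auto simp: cis_conv_exp mult.commute)

lemma unif_trig:
  fixes phi :: "real \<Rightarrow> complex"
  assumes cont: "continuous_on {0..2*pi} phi" and per: "phi 0 = phi (2*pi)" and eta: "eta > 0"
  shows "\<exists>F c. finite F \<and> (\<forall>t\<in>{0..2*pi}. cmod (phi t - tp F c t) < eta)"
proof -
  define psi where "psi z = phi (Arg2pi z)" for z
  have eq: "psi (cis t) = phi t" if "t \<in> {0..2*pi}" for t
  proof (cases "t = 2*pi")
    case True
    have "Arg2pi 1 = 0" by (simp add: Arg2pi_eq_0)
    then show ?thesis using per True by (simp add: psi_def)
  next
    case False
    then show ?thesis using that by (simp add: psi_def Arg2pi_cis)
  qed
  have q: "quotient_map (top_of_set {0..2*pi}) (top_of_set (sphere 0 1)) cis"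
  proof (rule continuous_imp_quotient_map)
    show "continuous_map (top_of_set {0..2*pi}) (top_of_set (sphere 0 1)) cis"
      using cis_image by (auto simp: continuous_map_in_subtopology intro!: continuous_intros)
    show "compact_space (top_of_set {0..2*pi::real})"
      by (rule compact_space_subtopology) simp
    show "Hausdorff_space (top_of_set (sphere (0::complex) 1))"
      by (rule Hausdorff_space_subtopology) simp
    show "cis ` topspace (top_of_set {0..2*pi}) = topspace (top_of_set (sphere 0 1))"
      using cis_image by simp
  qed
  have "continuous_map (top_of_set {0..2*pi}) euclidean (psi \<circ> cis)"
    by (rule continuous_map_eq[of _ _ phi]) (use cont eq in auto)
  then have "continuous_map (top_of_set (sphere 0 1)) euclidean psi"
    by (rule continuous_compose_quotient_map[OF q])
  then have cpsi: "continuous_on (sphere 0 1) psi" by simp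
  obtain P where P: "polynomial_function P" and Pb: "\<forall>x\<in>sphere 0 1. norm (psi x - P x) < eta"
    using Stone_Weierstrass_polynomial_function[OF compact_sphere cpsi eta] by blast
  obtain F c where F: "finite F" and Pc: "(\<lambda>t. P (cis t)) = tp F c"
    using poly_trig[OF P] unfolding trigpoly_def by blast
  have "\<forall>t\<in>{0..2*pi}. cmod (phi t - tp F c t) < eta"
  proof
    fix t assume t: "t \<in> {0..2*pi}"
    have "tp F c t = P (cis t)" using Pc by metis
    then show "cmod (phi t - tp F c t) < eta"
      using Pb[rule_format, of "cis t"] eq[OF t] by simp
  qed
  then show ?thesis using F by blast
qed



section \<open>Approximation in L2 by trigonometric polynomials\<close>

definition BM :: "(real \<Rightarrow> complex) \<Rightarrow> bool" where
  "BM g \<longleftrightarrow> g \<in> borel_measurable T_meas \<and> (\<exists>C. AE t in T_meas. cmod (g t) \<le> C)"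

definition d2 :: "(real \<Rightarrow> complex) \<Rightarrow> (real \<Rightarrow> complex) \<Rightarrow> real" where
  "d2 g h = integral\<^sup>L T_meas (\<lambda>t. (cmod (g t - h t))\<^sup>2)"

definition approx :: "(real \<Rightarrow> complex) \<Rightarrow> bool" where
  "approx g \<longleftrightarrow> (\<forall>e>0. \<exists>F c. finite F \<and> d2 g (tp F c) < e)"

lemma BM_L2r: "BM g \<Longrightarrow> L2r g"
  unfolding BM_def using L2r_bounded by blast

lemma BM_tp: "BM (tp F c)"
  unfolding BM_def using tp_bound by (auto intro!: AE_I2)

lemma BM_diff: "BM g \<Longrightarrow> BM h \<Longrightarrow> BM (\<lambda>t. g t - h t)"
proof -
  assume g: "BM g" and h: "BM h"
  then obtain C D where C: "AE t in T_meas. cmod (g t) \<le> C" and D: "AE t in T_meas. cmod (h t) \<le> D"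
    unfolding BM_def by blast
  have "AE t in T_meas. cmod (g t - h t) \<le> C + D"
    using C D by eventually_elim (rule order_trans[OF norm_triangle_ineq4], simp)
  then show ?thesis using g h unfolding BM_def by auto
qed

lemma BM_add: "BM g \<Longrightarrow> BM h \<Longrightarrow> BM (\<lambda>t. g t + h t)"
proof -
  assume g: "BM g" and h: "BM h"
  then obtain C D where C: "AE t in T_meas. cmod (g t) \<le> C" and D: "AE t in T_meas. cmod (h t) \<le> D"
    unfolding BM_def by blast
  have "AE t in T_meas. cmod (g t + h t) \<le> C + D"
    using C D by eventually_elim (rule order_trans[OF norm_triangle_ineq], simp)
  then show ?thesis using g h unfolding BM_def by auto
qed

lemma BM_scale: "BM g \<Longrightarrow> BM (\<lambda>t. a * g t)"
proof -
  assume g: "BM g"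
  then obtain C where C: "AE t in T_meas. cmod (g t) \<le> C" unfolding BM_def by blast
  have "AE t in T_meas. cmod (a * g t) \<le> cmod a * C"
    using C by eventually_elim (simp add: norm_mult mult_left_mono)
  then show ?thesis using g unfolding BM_def by auto
qed

lemma BM_sum: "finite I \<Longrightarrow> (\<And>i. i \<in> I \<Longrightarrow> BM (g i)) \<Longrightarrow> BM (\<lambda>t. \<Sum>i\<in>I. g i t)"
proof (induction I rule: finite_induct)
  case empty
  then show ?case unfolding BM_def by (auto intro!: AE_I2)
next
  case (insert x F)
  then show ?case by (simp add: BM_add)
qed

lemma d2_int: "BM g \<Longrightarrow> BM h \<Longrightarrow> integrable T_meas (\<lambda>t. (cmod (g t - h t))\<^sup>2)"
  using BM_L2r[OF BM_diff] unfolding L2r_def by blast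

lemma d2_nonneg: "d2 g h \<ge> 0"
  unfolding d2_def by simp

lemma d2_tri:
  assumes "BM g" "BM h" "BM q"
  shows "d2 g q \<le> 2 * d2 g h + 2 * d2 h q"
proof -
  have "d2 g q \<le> integral\<^sup>L T_meas (\<lambda>t. 2 * (cmod (g t - h t))\<^sup>2 + 2 * (cmod (h t - q t))\<^sup>2)"
    unfolding d2_def
  proof (rule integral_mono)
    show "integrable T_meas (\<lambda>t. (cmod (g t - q t))\<^sup>2)" by (rule d2_int[OF assms(1,3)])
    show "integrable T_meas (\<lambda>t. 2 * (cmod (g t - h t))\<^sup>2 + 2 * (cmod (h t - q t))\<^sup>2)"
      using d2_int[OF assms(1,2)] d2_int[OF assms(2,3)] by auto
    fix t
    have "g t - q t = (g t - h t) + (h t - q t)" by simp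
    then show "(cmod (g t - q t))\<^sup>2 \<le> 2 * (cmod (g t - h t))\<^sup>2 + 2 * (cmod (h t - q t))\<^sup>2"
      using norm_sq_add_le[of "g t - h t" "h t - q t"] by simp
  qed
  also have "\<dots> = 2 * d2 g h + 2 * d2 h q"
    unfolding d2_def using d2_int[OF assms(1,2)] d2_int[OF assms(2,3)] by simp
  finally show ?thesis .
qed

lemma approx_close:
  assumes g: "BM g" and H: "\<And>e. e > 0 \<Longrightarrow> \<exists>h. BM h \<and> approx h \<and> d2 g h < e"
  shows "approx g"
  unfolding approx_def
proof (intro allI impI)
  fix e :: real assume e: "e > 0"
  obtain h where h: "BM h" "approx h" "d2 g h < e / 4" using H[of "e/4"] e by auto
  obtain F c where F: "finite F" "d2 h (tp F c) < e / 4"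
    using h(2) e unfolding approx_def by (meson zero_less_divide_iff zero_less_numeral)
  have "d2 g (tp F c) \<le> 2 * d2 g h + 2 * d2 h (tp F c)" by (rule d2_tri[OF g h(1) BM_tp])
  also have "\<dots> < e" using h(3) F(2) by simp
  finally show "\<exists>F c. finite F \<and> d2 g (tp F c) < e" using F(1) by blast
qed

lemma d2_unif:
  assumes "BM g" "BM h" "AE t in T_meas. cmod (g t - h t) \<le> eta"
  shows "d2 g h \<le> 2 * pi * eta\<^sup>2"
proof -
  have "d2 g h \<le> integral\<^sup>L T_meas (\<lambda>t. eta\<^sup>2)"
    unfolding d2_def
  proof (rule integral_mono_AE)
    show "integrable T_meas (\<lambda>t. (cmod (g t - h t))\<^sup>2)" by (rule d2_int[OF assms(1,2)])
    show "integrable T_meas (\<lambda>t. eta\<^sup>2)" by (rule integrable_T_const)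
    show "AE t in T_meas. (cmod (g t - h t))\<^sup>2 \<le> eta\<^sup>2"
      using assms(3) by eventually_elim (simp add: power_mono)
  qed
  also have "\<dots> = 2 * pi * eta\<^sup>2" using measure_T by simp
  finally show ?thesis .
qed

lemma approx_tp: "approx (tp F c)" if "finite F"
  unfolding approx_def d2_def using that by (auto intro!: exI[of _ F] exI[of _ c])

lemma approx_add:
  assumes "BM g1" "BM g2" "approx g1" "approx g2"
  shows "approx (\<lambda>t. g1 t + g2 t)"
  unfolding approx_def
proof (intro allI impI)
  fix e :: real assume e: "e > 0"
  obtain F1 c1 where F1: "finite F1" "d2 g1 (tp F1 c1) < e / 4"
    using assms(3) e unfolding approx_def by (meson zero_less_divide_iff zero_less_numeral)
  obtain F2 c2 where F2: "finite F2" "d2 g2 (tp F2 c2) < e / 4"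
    using assms(4) e unfolding approx_def by (meson zero_less_divide_iff zero_less_numeral)
  have "trigpoly (\<lambda>t. tp F1 c1 t + tp F2 c2 t)"
    using F1 F2 by (intro trigpoly_add) (auto simp: trigpoly_def)
  then obtain F c where F: "finite F" "(\<lambda>t. tp F1 c1 t + tp F2 c2 t) = tp F c" unfolding trigpoly_def by blast
  have "d2 (\<lambda>t. g1 t + g2 t) (tp F c) \<le> integral\<^sup>L T_meas (\<lambda>t. 2 * (cmod (g1 t - tp F1 c1 t))\<^sup>2 + 2 * (cmod (g2 t - tp F2 c2 t))\<^sup>2)"
    unfolding d2_def
  proof (rule integral_mono)
    show "integrable T_meas (\<lambda>t. (cmod (g1 t + g2 t - tp F c t))\<^sup>2)"
      by (rule d2_int[OF BM_add[OF assms(1,2)] BM_tp])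
    show "integrable T_meas (\<lambda>t. 2 * (cmod (g1 t - tp F1 c1 t))\<^sup>2 + 2 * (cmod (g2 t - tp F2 c2 t))\<^sup>2)"
      using d2_int[OF assms(1) BM_tp] d2_int[OF assms(2) BM_tp] by auto
    fix t
    have "g1 t + g2 t - tp F c t = (g1 t - tp F1 c1 t) + (g2 t - tp F2 c2 t)"
      using fun_cong[OF F(2), of t] by (simp add: algebra_simps)
    then show "(cmod (g1 t + g2 t - tp F c t))\<^sup>2 \<le> 2 * (cmod (g1 t - tp F1 c1 t))\<^sup>2 + 2 * (cmod (g2 t - tp F2 c2 t))\<^sup>2"
      using norm_sq_add_le[of "g1 t - tp F1 c1 t" "g2 t - tp F2 c2 t"] by (simp only:)
  qed
  also have "\<dots> = 2 * d2 g1 (tp F1 c1) + 2 * d2 g2 (tp F2 c2)"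
    unfolding d2_def using d2_int[OF assms(1) BM_tp] d2_int[OF assms(2) BM_tp] by simp
  also have "\<dots> < e" using F1 F2 by simp
  finally show "\<exists>F c. finite F \<and> d2 (\<lambda>t. g1 t + g2 t) (tp F c) < e" using F(1) by blast
qed

lemma approx_scale:
  assumes "approx g"
  shows "approx (\<lambda>t. a * g t)"
  unfolding approx_def
proof (intro allI impI)
  fix e :: real assume e: "e > 0"
  define A where "A = (cmod a)\<^sup>2 + 1"
  have A: "A > 0" "(cmod a)\<^sup>2 < A" unfolding A_def by (auto simp: add_nonneg_pos)
  obtain F c where F: "finite F" "d2 g (tp F c) < e / A"
    using assms e A unfolding approx_def by (meson divide_pos_pos)
  have eq: "tp F (\<lambda>n. a * c n) t = a * tp F c t" for t
    unfolding tp_def by (simp add: sum_distrib_left mult.assoc)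
  have "d2 (\<lambda>t. a * g t) (tp F (\<lambda>n. a * c n)) = (cmod a)\<^sup>2 * d2 g (tp F c)"
    unfolding d2_def eq by (simp add: right_diff_distrib[symmetric] norm_mult power_mult_distrib)
  also have "\<dots> \<le> A * d2 g (tp F c)" using A d2_nonneg[of g "tp F c"] by (intro mult_right_mono) auto
  also have "\<dots> < e" using F(2) A by (simp add: field_simps)
  finally show "\<exists>F c. finite F \<and> d2 (\<lambda>t. a * g t) (tp F c) < e" using F(1) by blast
qed

lemma approx_sum:
  "finite I \<Longrightarrow> (\<And>i. i \<in> I \<Longrightarrow> BM (g i) \<and> approx (g i)) \<Longrightarrow> approx (\<lambda>t. \<Sum>i\<in>I. g i t)"
proof (induction I rule: finite_induct)
  case empty
  have "approx (tp {} c)" for c by (rule approx_tp) simp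
  moreover have "tp {} c = (\<lambda>t. 0)" for c unfolding tp_def by (rule ext) simp
  ultimately show ?case by simp
next
  case (insert x F)
  have "approx (\<lambda>t. g x t + (\<Sum>i\<in>F. g i t))"
    using insert by (intro approx_add BM_sum) auto
  then show ?case using insert by simp
qed

lemma approx_cont:
  assumes cont: "continuous_on {0..2*pi} phi" and per: "phi 0 = phi (2*pi)"
  shows "approx phi"
proof -
  have m: "phi \<in> borel_measurable T_meas"
    unfolding T_meas_def by (rule continuous_imp_measurable_on_sets_lebesgue[OF cont]) simp
  obtain C where C: "\<forall>t\<in>{0..2*pi}. cmod (phi t) \<le> C"
    using compact_imp_bounded[OF compact_continuous_image[OF cont compact_Icc]]
    unfolding bounded_iff by auto
  have "AE t in T_meas. cmod (phi t) \<le> C" using C by (intro AE_I2) simp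
  then have BMp: "BM phi" unfolding BM_def using m by blast
  show ?thesis
  proof (rule approx_close[OF BMp])
    fix e :: real assume e: "e > 0"
    define eta where "eta = min 1 (e / (4 * pi))"
    have eta: "eta > 0" "eta \<le> 1" "eta \<le> e / (4 * pi)" unfolding eta_def using e by auto
    obtain F c where F: "finite F" "\<forall>t\<in>{0..2*pi}. cmod (phi t - tp F c t) < eta"
      using unif_trig[OF cont per eta(1)] by blast
    have "d2 phi (tp F c) \<le> 2 * pi * eta\<^sup>2"
      by (rule d2_unif[OF BMp BM_tp]) (use F(2) in \<open>auto intro!: AE_I2 less_imp_le\<close>)
    also have "\<dots> \<le> 2 * pi * eta"
      using eta by (intro mult_left_mono) (auto simp: power2_eq_square mult_le_cancel_right1)
    also have "\<dots> \<le> 2 * pi * (e / (4 * pi))" using eta by (intro mult_left_mono) auto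
    also have "\<dots> < e" using e by (simp add: field_simps)
    finally show "\<exists>h. BM h \<and> approx h \<and> d2 phi h < e"
      using BM_tp approx_tp[OF F(1)] by blast
  qed
qed



lemma Icc_lmeas: "{a..b::real} \<in> lmeasurable"
  using lmeasurable_cbox[of a b] by simp

lemma approx_ind:
  assumes A: "A \<in> sets T_meas"
  shows "approx (\<lambda>t. complex_of_real (indicator A t))"
proof -
  have Al: "A \<in> sets lebesgue" and Asub: "A \<subseteq> {0..2*pi}" using sets_T_lebesgue[OF A] by auto
  define ind where "ind t = complex_of_real (indicator A t)" for t
  have indm: "ind \<in> borel_measurable T_meas" unfolding ind_def using A by measurable
  have BMi: "BM ind" unfolding BM_def using indm
    by (intro conjI exI[of _ 1] AE_I2) (auto simp: ind_def indicator_def)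
  show ?thesis unfolding ind_def[symmetric]
  proof (rule approx_close[OF BMi])
    fix e :: real assume e: "e > 0"
    define dl where "dl = min 1 (e / 16)"
    have dl: "dl > 0" "dl \<le> 1" "dl \<le> e / 16" unfolding dl_def using e by auto
    obtain Fc where Fc: "closed Fc" "Fc \<subseteq> A" "A - Fc \<in> lmeasurable" "emeasure lebesgue (A - Fc) < ennreal (e / 16)"
      using sets_lebesgue_inner_closed[OF Al, of "e/16"] e by auto
    obtain U where U: "open U" "A \<subseteq> U" "U - A \<in> lmeasurable" "emeasure lebesgue (U - A) < ennreal (e / 16)"
      using sets_lebesgue_outer_open[OF Al, of "e/16"] e by auto
    define F' where "F' = Fc \<inter> {dl..2*pi - dl}"
    define V where "V = U \<inter> {dl/2<..<2*pi - dl/2}"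
    have cF': "closed F'" unfolding F'_def using Fc(1) by (intro closed_Int) auto
    have oV: "open V" unfolding V_def using U(1) by (intro open_Int) auto
    have F'V: "F' \<inter> - V = {}" unfolding F'_def V_def using Fc(2) U(2) dl(1) by auto
    obtain f :: "real \<Rightarrow> real" where f: "continuous_on UNIV f" "\<And>x. f x \<in> closed_segment 1 0"
      "\<And>x. f x = 1 \<longleftrightarrow> x \<in> F'" "\<And>x. f x = 0 \<longleftrightarrow> x \<in> - V"
    proof -
      have c2: "closed (- V)" using oV by (simp add: closed_Compl)
      have ne: "(1::real) \<noteq> 0" by simp
      show ?thesis using Urysohn_strong[OF cF' c2 F'V ne] that by blast
    qed
    have f01: "0 \<le> f x" "f x \<le> 1" for x using f(2)[of x] by (auto simp: closed_segment_eq_real_ivl)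
    define phi where "phi t = complex_of_real (f t)" for t
    have cphi: "continuous_on {0..2*pi} phi" unfolding phi_def
      by (intro continuous_intros continuous_on_subset[OF f(1)]) auto
    have p0: "phi 0 = 0" using f(4)[of 0] dl(1) by (simp add: phi_def V_def)
    have p2: "phi (2*pi) = 0" using f(4)[of "2*pi"] dl(1) by (simp add: phi_def V_def)
    have aphi: "approx phi" by (rule approx_cont[OF cphi]) (simp add: p0 p2)
    have phim: "phi \<in> borel_measurable T_meas" unfolding phi_def
      by (rule cont_meas_T) (intro continuous_intros f(1))
    have BMp: "BM phi" unfolding BM_def using phim f01
      by (intro conjI exI[of _ 1] AE_I2) (auto simp: phi_def)
    define E where "E = (U - A) \<union> (A - Fc) \<union> {0..dl} \<union> {2*pi - dl..2*pi}"
    have El: "E \<in> lmeasurable" unfolding E_def using U(3) Fc(3) Icc_lmeas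
      by (intro fmeasurable.Un) auto
    have ET: "E \<inter> {0..2*pi} \<in> sets T_meas"
      unfolding T_meas_def using El by (auto simp: sets_restrict_space_iff fmeasurableD)
    have pw: "(cmod (ind t - phi t))\<^sup>2 \<le> indicator (E \<inter> {0..2*pi}) t" if t: "t \<in> {0..2*pi}" for t
    proof (cases "t \<in> E")
      case True
      have "ind t - phi t = complex_of_real (indicator A t - f t)" by (simp add: ind_def phi_def)
      then have "cmod (ind t - phi t) = \<bar>indicator A t - f t\<bar>" by (simp only: norm_of_real)
      also have "\<dots> \<le> 1" using f01[of t] by (auto simp: indicator_def)
      finally have "cmod (ind t - phi t) \<le> 1" .
      then have "(cmod (ind t - phi t))\<^sup>2 \<le> 1" by (simp add: power_le_one)
      then show ?thesis using True t by simp
    next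
      case False
      then have tUA: "t \<notin> U - A" and tAF: "t \<notin> A - Fc" and tmid: "dl < t" "t < 2*pi - dl"
        using t unfolding E_def by auto
      show ?thesis
      proof (cases "t \<in> A")
        case True
        then have "t \<in> F'" using tAF tmid unfolding F'_def by auto
        then have "f t = 1" using f(3) by simp
        then show ?thesis using True by (simp add: ind_def phi_def)
      next
        case False
        then have "t \<notin> U" using tUA by auto
        then have "t \<in> - V" unfolding V_def by auto
        then have "f t = 0" using f(4) by simp
        then show ?thesis using False by (simp add: ind_def phi_def)
      qed
    qed
    have "d2 ind phi \<le> integral\<^sup>L T_meas (indicator (E \<inter> {0..2*pi}))"
      unfolding d2_def
    proof (rule integral_mono)
      show "integrable T_meas (\<lambda>t. (cmod (ind t - phi t))\<^sup>2)" by (rule d2_int[OF BMi BMp])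
      show "integrable T_meas (indicator (E \<inter> {0..2*pi}) :: real \<Rightarrow> real)"
        by (rule Bochner_Integration.integrable_bound[OF integrable_T_const[of "1::real"]])
          (auto intro!: AE_I2 borel_measurable_indicator ET simp: indicator_def)
      show "\<And>t. t \<in> space T_meas \<Longrightarrow> (cmod (ind t - phi t))\<^sup>2 \<le> indicator (E \<inter> {0..2*pi}) t"
        using pw by simp
    qed
    also have "\<dots> = measure lebesgue (E \<inter> {0..2*pi})"
      unfolding T_meas_def by (simp add: measure_restrict_space Int_absorb2)
    also have "\<dots> \<le> measure lebesgue E"
      using El by (intro measure_mono_fmeasurable) (auto simp: fmeasurableD)
    also have "\<dots> \<le> measure lebesgue (U - A) + measure lebesgue (A - Fc) + measure lebesgue {0..dl} + measure lebesgue {2*pi - dl..2*pi}"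
      unfolding E_def using U(3) Fc(3) Icc_lmeas
      by (smt (verit) fmeasurableD fmeasurable.Un measure_Un_le)
    also have "\<dots> < e / 16 + e / 16 + e / 16 + e / 16"
    proof -
      have "measure lebesgue (U - A) < e / 16"
        using U(3,4) e by (simp add: emeasure_eq_measure2 ennreal_less_iff)
      moreover have "measure lebesgue (A - Fc) < e / 16"
        using Fc(3,4) e by (simp add: emeasure_eq_measure2 ennreal_less_iff)
      moreover have "measure lebesgue {0..dl} \<le> e / 16" using dl by simp
      moreover have "measure lebesgue {2*pi - dl..2*pi} \<le> e / 16" using dl by simp
      ultimately show ?thesis by linarith
    qed
    also have "\<dots> < e" using e by simp
    finally show "\<exists>h. BM h \<and> approx h \<and> d2 ind h < e" using BMp aphi by blast
  qed
qed


lemma floor_approx: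
  assumes "N > (0::real)"
  shows "\<bar>r - of_int \<lfloor>N * r\<rfloor> / N\<bar> \<le> 1 / N"
proof -
  have a: "of_int \<lfloor>N * r\<rfloor> \<le> N * r" and b: "N * r < of_int \<lfloor>N * r\<rfloor> + 1"
    by linarith+
  have "r - of_int \<lfloor>N * r\<rfloor> / N = (N * r - of_int \<lfloor>N * r\<rfloor>) / N" using assms by (simp add: field_simps)
  moreover have "0 \<le> N * r - of_int \<lfloor>N * r\<rfloor>" "N * r - of_int \<lfloor>N * r\<rfloor> \<le> 1" using a b by linarith+
  ultimately show ?thesis using assms by (simp add: divide_right_mono)
qed

lemma floor_range:
  assumes "\<bar>r\<bar> \<le> (1::real)"
  shows "\<lfloor>real N * r\<rfloor> \<in> {- int N..int N}"
proof -
  have r: "- 1 \<le> r" "r \<le> 1" using assms by auto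
  have "real N * (- 1) \<le> real N * r" by (rule mult_left_mono) (use r in auto)
  moreover have "real N * r \<le> real N * 1" by (rule mult_left_mono) (use r in auto)
  ultimately have "- real N \<le> real N * r" "real N * r \<le> real N" by simp_all
  then show ?thesis by (simp add: le_floor_iff floor_le_iff)
qed

lemma sum_ind_floor:
  fixes J :: "int set" and r :: "real \<Rightarrow> real"
  assumes "finite J" "\<lfloor>real N * r t\<rfloor> \<in> J" "t \<in> S"
  shows "(\<Sum>j\<in>J. complex_of_real (of_int j / real N) * complex_of_real (indicator {x \<in> S. \<lfloor>real N * r x\<rfloor> = j} t))
      = complex_of_real (of_int \<lfloor>real N * r t\<rfloor> / real N)"
proof -
  have "(\<Sum>j\<in>J. complex_of_real (of_int j / real N) * complex_of_real (indicator {x \<in> S. \<lfloor>real N * r x\<rfloor> = j} t))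
      = (\<Sum>j\<in>J. if j = \<lfloor>real N * r t\<rfloor> then complex_of_real (of_int j / real N) else 0)"
    using assms(3) by (intro sum.cong refl) (auto simp: indicator_def)
  also have "\<dots> = complex_of_real (of_int \<lfloor>real N * r t\<rfloor> / real N)"
    using assms(1,2) by (simp add: sum.delta')
  finally show ?thesis .
qed

lemma BM_ind: "BM (\<lambda>t. complex_of_real (indicator A t))" if "A \<in> sets T_meas"
  unfolding BM_def using that
  by (intro conjI exI[of _ 1] AE_I2) (measurable, auto simp: indicator_def)

lemma approx_BM:
  assumes Gm: "G \<in> borel_measurable T_meas" and G1: "AE t in T_meas. cmod (G t) \<le> 1"
  shows "approx G"
proof -
  have [measurable]: "G \<in> borel_measurable T_meas" by fact
  have BMG: "BM G" unfolding BM_def using Gm G1 by blast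
  show ?thesis
  proof (rule approx_close[OF BMG])
    fix e :: real assume e: "e > 0"
    define N :: nat where "N = nat \<lceil>8 * pi / e\<rceil> + 1"
    have Npos: "real N > 0" unfolding N_def by simp
    have N1: "real N \<ge> 1" unfolding N_def by simp
    have Nbig: "8 * pi / e < real N" unfolding N_def by linarith
    then have Ne: "8 * pi / real N < e" using e Npos by (simp add: field_simps)
    define J where "J = {- int N..int N}"
    have fJ: "finite J" unfolding J_def by simp
    define SR where "SR j = {t \<in> space T_meas. \<lfloor>real N * Re (G t)\<rfloor> = j}" for j
    define SI where "SI j = {t \<in> space T_meas. \<lfloor>real N * Im (G t)\<rfloor> = j}" for j
    have SRm: "SR j \<in> sets T_meas" for j unfolding SR_def by measurable
    have SIm: "SI j \<in> sets T_meas" for j unfolding SI_def by measurable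
    define hR where "hR t = (\<Sum>j\<in>J. complex_of_real (of_int j / real N) * complex_of_real (indicator (SR j) t))" for t
    define hI where "hI t = (\<Sum>j\<in>J. complex_of_real (of_int j / real N) * complex_of_real (indicator (SI j) t))" for t
    define h where "h t = hR t + \<i> * hI t" for t
    have BMR: "BM hR" unfolding hR_def by (intro BM_sum fJ BM_scale BM_ind SRm)
    have BMI: "BM hI" unfolding hI_def by (intro BM_sum fJ BM_scale BM_ind SIm)
    have BMh: "BM h" unfolding h_def by (intro BM_add BM_scale BMR BMI)
    have aR: "approx hR" unfolding hR_def
      by (intro approx_sum fJ conjI BM_scale BM_ind SRm approx_scale approx_ind)
    have aI: "approx hI" unfolding hI_def
      by (intro approx_sum fJ conjI BM_scale BM_ind SIm approx_scale approx_ind)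
    have ah: "approx h" unfolding h_def by (intro approx_add BMR BM_scale BMI aR approx_scale aI)
    have pw: "AE t in T_meas. cmod (G t - h t) \<le> 2 / real N"
      using AE_space G1
    proof eventually_elim
      case (elim t)
      then have t: "t \<in> space T_meas" and g: "cmod (G t) \<le> 1" by auto
      have rR: "\<bar>Re (G t)\<bar> \<le> 1" using g abs_Re_le_cmod order_trans by blast
      have rI: "\<bar>Im (G t)\<bar> \<le> 1" using g abs_Im_le_cmod order_trans by blast
      have hRt: "hR t = complex_of_real (of_int \<lfloor>real N * Re (G t)\<rfloor> / real N)"
        unfolding hR_def SR_def
        by (rule sum_ind_floor[OF fJ _ t, where r="\<lambda>x. Re (G x)"]) (use floor_range[OF rR, of N] in \<open>simp add: J_def\<close>)
      have hIt: "hI t = complex_of_real (of_int \<lfloor>real N * Im (G t)\<rfloor> / real N)"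
        unfolding hI_def SI_def
        by (rule sum_ind_floor[OF fJ _ t, where r="\<lambda>x. Im (G x)"]) (use floor_range[OF rI, of N] in \<open>simp add: J_def\<close>)
      have "cmod (G t - h t) \<le> \<bar>Re (G t - h t)\<bar> + \<bar>Im (G t - h t)\<bar>" by (rule cmod_le)
      also have "Re (G t - h t) = Re (G t) - of_int \<lfloor>real N * Re (G t)\<rfloor> / real N"
        by (simp add: h_def hRt hIt)
      also have "Im (G t - h t) = Im (G t) - of_int \<lfloor>real N * Im (G t)\<rfloor> / real N"
        by (simp add: h_def hRt hIt)
      also have "\<bar>Re (G t) - of_int \<lfloor>real N * Re (G t)\<rfloor> / real N\<bar> + \<bar>Im (G t) - of_int \<lfloor>real N * Im (G t)\<rfloor> / real N\<bar>
          \<le> 1 / real N + 1 / real N"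
        by (intro add_mono floor_approx Npos)
      finally show ?case by simp
    qed
    have "d2 G h \<le> 2 * pi * (2 / real N)\<^sup>2" by (rule d2_unif[OF BMG BMh pw])
    also have "\<dots> = 8 * pi / real N * (1 / real N)" by (simp add: power2_eq_square field_simps)
    also have "\<dots> \<le> 8 * pi / real N * 1"
      using N1 by (intro mult_left_mono) auto
    also have "\<dots> < e" using Ne by simp
    finally show "\<exists>h. BM h \<and> approx h \<and> d2 G h < e" using BMh ah by blast
  qed
qed



lemma density:
  assumes "G \<in> borel_measurable T_meas" "AE t in T_meas. cmod (G t) \<le> 1" "e > 0"
  shows "\<exists>F c. finite F \<and> integral\<^sup>L T_meas (\<lambda>t. (cmod (G t - tp F c t))\<^sup>2) < e"
  using approx_BM[OF assms(1,2)] assms(3) unfolding approx_def d2_def by blast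



lemma ineq_lam:
  fixes x y lam :: real
  assumes "lam > 0"
  shows "x * y \<le> (lam * x\<^sup>2 + y\<^sup>2 / lam) / 2"
proof -
  have "0 \<le> (lam * x - y)\<^sup>2" by simp
  then have "2 * lam * (x * y) \<le> lam * (lam * x\<^sup>2) + y\<^sup>2"
    by (simp add: power2_diff power2_eq_square algebra_simps)
  then have "2 * lam * (x * y) \<le> lam * (lam * x\<^sup>2 + y\<^sup>2 / lam)"
    using assms by (simp add: algebra_simps)
  then have "2 * (x * y) \<le> lam * x\<^sup>2 + y\<^sup>2 / lam"
    using assms by (metis mult.assoc mult.commute mult_le_cancel_left_pos)
  then show ?thesis by simp
qed

lemma fc0_int: "fc f 0 = complex_of_real (1/(2*pi)) * integral\<^sup>L T_meas f"
  unfolding fc_def by simp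

lemma prod_coeff0:
  assumes HG: "H2r G" and G1: "AE t in T_meas. cmod (G t) \<le> 1" and Hk: "H2r k"
  shows "fc (\<lambda>t. G t * k t) 0 = fc G 0 * fc k 0"
proof -
  define D where "D = cmod (fc (\<lambda>t. G t * k t) 0 - fc G 0 * fc k 0)"
  define K where "K = integral\<^sup>L T_meas (\<lambda>t. (cmod (k t))\<^sup>2)"
  have K0: "K \<ge> 0" unfolding K_def by simp
  have GL: "L2r G" and kL: "L2r k" using HG Hk by (auto simp: H2r_def)
  have Gm [measurable]: "G \<in> borel_measurable T_meas" using GL by (simp add: L2r_def)
  have km [measurable]: "k \<in> borel_measurable T_meas" using kL by (simp add: L2r_def)
  have Gi: "integrable T_meas G" by (rule L2r_integrable[OF GL])
  have ki: "integrable T_meas k" by (rule L2r_integrable[OF kL])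
  have main: "D < d" if d: "d > 0" for d
  proof -
    define lam where "lam = 2 * (K + 1) / d"
    have lampos: "lam > 0" unfolding lam_def using K0 d by simp
    obtain F c where F: "finite F" and Ep: "integral\<^sup>L T_meas (\<lambda>t. (cmod (G t - tp F c t))\<^sup>2) < d / (2 * lam)"
      using density[OF Gm G1, of "d / (2 * lam)"] d lampos by auto
    define p where "p = tp F c"
    define h where "h t = p t - G t" for t
    define E where "E = integral\<^sup>L T_meas (\<lambda>t. (cmod (h t))\<^sup>2)"
    have pL: "L2r p" unfolding p_def by (rule tp_L2r)
    have pi': "integrable T_meas p" by (rule L2r_integrable[OF pL])
    have hL: "L2r h" unfolding h_def by (rule L2r_diff[OF pL GL])
    have hi: "integrable T_meas h" by (rule L2r_integrable[OF hL])
    have hm [measurable]: "h \<in> borel_measurable T_meas" using hL by (simp add: L2r_def)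
    have E0: "E \<ge> 0" unfolding E_def by simp
    have EE: "E < d / (2 * lam)"
      using Ep unfolding E_def h_def p_def by (simp add: norm_minus_commute)
    have fch: "fc h n = fc p n - fc G n" for n unfolding h_def by (rule fc_diff[OF pi' Gi])
    have fcp: "fc p n = (if n \<in> F then c n else 0)" for n unfolding p_def by (rule fc_tp[OF F])
    have fcG: "n < 0 \<Longrightarrow> fc G n = 0" for n using HG by (simp add: H2r_def)
    have fck: "n < 0 \<Longrightarrow> fc k n = 0" for n using Hk by (simp add: H2r_def)
    define F' where "F' = insert 0 {n \<in> F. n < 0}"
    have F'fin: "finite F'" unfolding F'_def using F by simp
    have Gk: "(\<lambda>t. G t * k t) = (\<lambda>t. k t * p t - h t * k t)"
      by (rule ext) (simp add: h_def algebra_simps)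
    have i1: "integrable T_meas (\<lambda>t. k t * p t)" by (rule integrable_mult_L2[OF kL pL])
    have i2: "integrable T_meas (\<lambda>t. h t * k t)" by (rule integrable_mult_L2[OF hL kL])
    have "fc (\<lambda>t. G t * k t) 0 = complex_of_real (1/(2*pi)) * (integral\<^sup>L T_meas (\<lambda>t. k t * p t) - integral\<^sup>L T_meas (\<lambda>t. h t * k t))"
      unfolding fc0_int Gk using i1 i2 by simp
    also have "integral\<^sup>L T_meas (\<lambda>t. k t * p t) = complex_of_real (2*pi) * (\<Sum>n\<in>F. c n * fc k (- n))"
      unfolding p_def by (rule int_mult_tp[OF ki F])
    finally have s1: "fc (\<lambda>t. G t * k t) 0 = (\<Sum>n\<in>F. c n * fc k (- n)) - complex_of_real (1/(2*pi)) * integral\<^sup>L T_meas (\<lambda>t. h t * k t)"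
      by (simp add: algebra_simps)
    define phi where "phi n = fc p n * fc k (- n)" for n
    have "(\<Sum>n\<in>F. c n * fc k (- n)) = (\<Sum>n\<in>F. phi n)"
      by (intro sum.cong refl) (simp add: phi_def fcp)
    also have "\<dots> = (\<Sum>n\<in>F \<union> F'. phi n)"
      by (rule sum.mono_neutral_left) (use F F'fin in \<open>auto simp: phi_def fcp\<close>)
    also have "\<dots> = (\<Sum>n\<in>F'. phi n)"
    proof (rule sum.mono_neutral_left[symmetric])
      show "finite (F \<union> F')" using F F'fin by simp
      show "F' \<subseteq> F \<union> F'" by simp
      show "\<forall>i\<in>F \<union> F' - F'. phi i = 0"
      proof
        fix i assume "i \<in> F \<union> F' - F'"
        then have "i > 0" unfolding F'_def by auto
        then show "phi i = 0" unfolding phi_def using fck[of "- i"] by simp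
      qed
    qed
    also have "\<dots> = (\<Sum>n\<in>F'. fc h n * fc k (- n) + fc G n * fc k (- n))"
      by (intro sum.cong refl) (simp add: phi_def fch algebra_simps)
    also have "\<dots> = (\<Sum>n\<in>F'. fc h n * fc k (- n)) + (\<Sum>n\<in>F'. fc G n * fc k (- n))"
      by (rule sum.distrib)
    also have "(\<Sum>n\<in>F'. fc G n * fc k (- n)) = fc G 0 * fc k 0"
      unfolding F'_def using F by (simp add: fcG)
    finally have ident: "fc (\<lambda>t. G t * k t) 0 - fc G 0 * fc k 0
        = (\<Sum>n\<in>F'. fc h n * fc k (- n)) - complex_of_real (1/(2*pi)) * integral\<^sup>L T_meas (\<lambda>t. h t * k t)"
      using s1 by simp
    have b1: "2 * pi * (\<Sum>n\<in>F'. (cmod (fc h n))\<^sup>2) \<le> E"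
      unfolding E_def by (rule bessel[OF hL F'fin])
    have "(\<Sum>n\<in>F'. (cmod (fc k (- n)))\<^sup>2) = (\<Sum>m\<in>uminus ` F'. (cmod (fc k m))\<^sup>2)"
      by (subst sum.reindex) (auto intro: inj_onI)
    also have "2 * pi * \<dots> \<le> K"
      unfolding K_def by (rule bessel[OF kL]) (use F'fin in simp)
    finally have b2: "2 * pi * (\<Sum>n\<in>F'. (cmod (fc k (- n)))\<^sup>2) \<le> K" .
    have pi1: "1 \<le> 2 * pi" using pi_gt3 by simp
    have sb: "cmod (\<Sum>n\<in>F'. fc h n * fc k (- n)) \<le> (lam * E + K / lam) / 2"
    proof -
      have "cmod (\<Sum>n\<in>F'. fc h n * fc k (- n)) \<le> (\<Sum>n\<in>F'. cmod (fc h n) * cmod (fc k (- n)))"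
        by (rule order_trans[OF norm_sum]) (simp add: norm_mult)
      also have "\<dots> \<le> (\<Sum>n\<in>F'. (lam * (cmod (fc h n))\<^sup>2 + (cmod (fc k (- n)))\<^sup>2 / lam) / 2)"
        by (intro sum_mono ineq_lam lampos)
      also have "\<dots> = (lam * (\<Sum>n\<in>F'. (cmod (fc h n))\<^sup>2) + (\<Sum>n\<in>F'. (cmod (fc k (- n)))\<^sup>2) / lam) / 2"
        by (simp only: sum_divide_distrib[symmetric] sum.distrib sum_distrib_left[symmetric])
      also have "\<dots> \<le> (lam * E + K / lam) / 2"
      proof -
        have "(\<Sum>n\<in>F'. (cmod (fc h n))\<^sup>2) \<le> E"
          using b1 pi1 by (smt (verit) mult_le_cancel_right1 sum_nonneg zero_le_power2)
        moreover have "(\<Sum>n\<in>F'. (cmod (fc k (- n)))\<^sup>2) \<le> K"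
          using b2 pi1 by (smt (verit) mult_le_cancel_right1 sum_nonneg zero_le_power2)
        ultimately show ?thesis using lampos
          by (intro divide_right_mono add_mono mult_left_mono) auto
      qed
      finally show ?thesis .
    qed
    have ib: "cmod (complex_of_real (1/(2*pi)) * integral\<^sup>L T_meas (\<lambda>t. h t * k t)) \<le> (lam * E + K / lam) / 2"
    proof -
      have "cmod (integral\<^sup>L T_meas (\<lambda>t. h t * k t)) \<le> integral\<^sup>L T_meas (\<lambda>t. cmod (h t * k t))"
        by (rule integral_norm_bound)
      also have "\<dots> \<le> integral\<^sup>L T_meas (\<lambda>t. (lam * (cmod (h t))\<^sup>2 + (cmod (k t))\<^sup>2 / lam) / 2)"
      proof (rule integral_mono)
        show "integrable T_meas (\<lambda>t. cmod (h t * k t))" using i2 by simp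
        show "integrable T_meas (\<lambda>t. (lam * (cmod (h t))\<^sup>2 + (cmod (k t))\<^sup>2 / lam) / 2)"
          using hL kL unfolding L2r_def by auto
        show "cmod (h t * k t) \<le> (lam * (cmod (h t))\<^sup>2 + (cmod (k t))\<^sup>2 / lam) / 2" for t
          unfolding norm_mult by (rule ineq_lam[OF lampos])
      qed
      also have "\<dots> = (lam * E + K / lam) / 2"
        using hL kL unfolding L2r_def E_def K_def by simp
      finally have "cmod (integral\<^sup>L T_meas (\<lambda>t. h t * k t)) \<le> (lam * E + K / lam) / 2" .
      moreover have "cmod (complex_of_real (1/(2*pi))) \<le> 1"
        unfolding norm_of_real using pi1 by simp
      ultimately show ?thesis unfolding norm_mult
        by (meson mult_left_le_one_le norm_ge_zero order_trans)
    qed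
    have "D \<le> lam * E + K / lam"
    proof -
      have tri: "\<And>X A B Z::real. X \<le> A + B \<Longrightarrow> A \<le> Z/2 \<Longrightarrow> B \<le> Z/2 \<Longrightarrow> X \<le> Z" by linarith
      show ?thesis unfolding D_def ident by (rule tri[OF norm_triangle_ineq4 sb ib])
    qed
    also have "lam * E < d / 2"
      using EE lampos by (simp add: field_simps)
    then have "lam * E + K / lam < d / 2 + K / lam" by simp
    also have "K / lam \<le> d / 2"
      unfolding lam_def using K0 d by (simp add: field_simps)
    finally show "D < d" by simp
  qed
  have "D = 0"
  proof (rule ccontr)
    assume "D \<noteq> 0"
    then have "D > 0" unfolding D_def by simp
    then show False using main[of D] by simp
  qed
  then show ?thesis unfolding D_def by simp
qed



lemma H2r_shift_down:
  assumes Hw: "H2r w" and w0: "fc w 0 = 0"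
  shows "H2r (\<lambda>t. w t * cis (- t))"
  unfolding H2r_def
proof
  show "L2r (\<lambda>t. w t * cis (- t))"
    by (rule L2r_mult_bounded[OF H2r_L2r[OF Hw], where C=1]) (auto intro: AE_I2)
  show "\<forall>n<0. fc (\<lambda>t. w t * cis (- t)) n = 0"
  proof (intro allI impI)
    fix n :: int assume "n < 0"
    then consider "n + 1 < 0" | "n + 1 = 0" by linarith
    then show "fc (\<lambda>t. w t * cis (- t)) n = 0"
      unfolding fc_shift_div using Hw w0 unfolding H2r_def by cases auto
  qed
qed

lemma const_if_norm_fc0:
  assumes m: "G \<in> borel_measurable T_meas" and u: "AE t in T_meas. cmod (G t) = 1"
    and c1: "cmod (fc G 0) = 1"
  shows "AE t in T_meas. G t = fc G 0"
proof -
  define c where "c = fc G 0"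
  have [measurable]: "G \<in> borel_measurable T_meas" by fact
  have iG: "integrable T_meas G"
    by (rule integrable_T_bound[where C=1]) (use u in \<open>auto elim: eventually_mono\<close>)
  have intG: "integral\<^sup>L T_meas G = complex_of_real (2*pi) * c"
    unfolding c_def fc_def by simp
  have ae: "AE t in T_meas. (cmod (G t - c))\<^sup>2 = 2 - 2 * Re (cnj c * G t)"
    using u
  proof eventually_elim
    case (elim t)
    have "complex_of_real ((cmod (G t - c))\<^sup>2) = (G t - c) * cnj (G t - c)"
      by (rule complex_norm_square)
    also have "\<dots> = G t * cnj (G t) + c * cnj c - (cnj c * G t + cnj (cnj c * G t))"
      by (simp add: algebra_simps)
    also have "\<dots> = complex_of_real (2 - 2 * Re (cnj c * G t))"
    proof -
      have e1: "G t * cnj (G t) = 1" using elim complex_norm_square[of "G t"] by simp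
      have e2: "c * cnj c = 1" using c1 complex_norm_square[of c] unfolding c_def by simp
      have e3: "cnj c * G t + cnj (cnj c * G t) = complex_of_real (2 * Re (cnj c * G t))"
        by (rule complex_add_cnj)
      show ?thesis unfolding e1 e2 e3 by simp
    qed
    finally show ?case using of_real_eq_iff by blast
  qed
  have i0: "integrable T_meas (\<lambda>t. Re (cnj c * G t))"
    by (intro integrable_Re integrable_mult_right iG)
  have i2: "integrable T_meas (\<lambda>t. 2 - 2 * Re (cnj c * G t))"
    by (intro Bochner_Integration.integrable_diff integrable_T_const integrable_mult_right i0)
  have m1: "(\<lambda>t. (cmod (G t - c))\<^sup>2) \<in> borel_measurable T_meas" by measurable
  have m2: "(\<lambda>t. 2 - 2 * Re (cnj c * G t)) \<in> borel_measurable T_meas" by measurable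
  have "integral\<^sup>L T_meas (\<lambda>t. (cmod (G t - c))\<^sup>2) = integral\<^sup>L T_meas (\<lambda>t. 2 - 2 * Re (cnj c * G t))"
    by (rule integral_cong_AE[OF m1 m2 ae])
  also have "\<dots> = integral\<^sup>L T_meas (\<lambda>t. 2::real) - integral\<^sup>L T_meas (\<lambda>t. 2 * Re (cnj c * G t))"
    by (rule Bochner_Integration.integral_diff[OF integrable_T_const integrable_mult_right[OF i0]])
  also have "integral\<^sup>L T_meas (\<lambda>t. 2::real) = 2 * (2 * pi)"
    using measure_T by simp
  also have "integral\<^sup>L T_meas (\<lambda>t. 2 * Re (cnj c * G t)) = 2 * Re (integral\<^sup>L T_meas (\<lambda>t. cnj c * G t))"
  proof -
    have "integral\<^sup>L T_meas (\<lambda>t. 2 * Re (cnj c * G t)) = 2 * integral\<^sup>L T_meas (\<lambda>t. Re (cnj c * G t))"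
      by (rule integral_mult_right_zero)
    also have "integral\<^sup>L T_meas (\<lambda>t. Re (cnj c * G t)) = Re (integral\<^sup>L T_meas (\<lambda>t. cnj c * G t))"
      by (rule integral_Re[OF integrable_mult_right[OF iG]])
    finally show ?thesis .
  qed
  also have "integral\<^sup>L T_meas (\<lambda>t. cnj c * G t) = cnj c * (complex_of_real (2*pi) * c)"
    using intG by simp
  also have "\<dots> = complex_of_real (2*pi) * (c * cnj c)" by (simp add: mult_ac)
  also have "c * cnj c = 1" using c1 complex_norm_square[of c] unfolding c_def by simp
  also have "2 * (2 * pi) - 2 * Re (complex_of_real (2 * pi) * 1) = 0" by simp
  finally have z: "integral\<^sup>L T_meas (\<lambda>t. (cmod (G t - c))\<^sup>2) = 0" .
  have "integrable T_meas (\<lambda>t. (cmod (G t - c))\<^sup>2)"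
    using i2 by (subst integrable_cong_AE[OF _ _ ae]) auto
  then have "AE t in T_meas. (cmod (G t - c))\<^sup>2 = 0"
    using z by (subst integral_nonneg_eq_0_iff_AE[symmetric]) auto
  then show ?thesis unfolding c_def[symmetric] by (auto elim: eventually_mono)
qed

lemma not_H_bound:
  assumes ab: "(a, b) \<in> Hbar" "(a, b) \<notin> Hset" and A0: "A 0 = a" "B 0 = b"
    and hs: "\<forall>n. (A (Suc n), B (Suc n)) \<in> Hbar \<and> step_rel (A n) (B n) (F n) (A (Suc n)) (B (Suc n))"
  shows "\<exists>g<1. \<forall>N. Re (at_inf (A N)) \<le> g"
proof -
  obtain g where ig: "inner_fun g" and ga: "H2_D (\<lambda>z. star_fun a z / g z)" and gb: "H2_D (\<lambda>z. b z / g z)"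
    and nc: "\<not> (\<exists>c. ae_T (\<lambda>z. g z = c))"
    using ab unfolding Hset_def by auto
  define G where "G t = g (cis t)" for t
  have HG: "H2r G" and uG: "AE t in T_meas. cmod (G t) = 1"
    using ig unfolding inner_fun_def G_def ae_T_def H2_D_iff by auto
  have Gm [measurable]: "G \<in> borel_measurable T_meas" using HG by (simp add: H2r_def L2r_def)
  have G1: "AE t in T_meas. cmod (G t) \<le> 1" using uG by (auto elim: eventually_mono)
  have hb: "(A n, B n) \<in> Hbar" for n
    using hs ab A0 by (cases n) auto
  have mA [measurable]: "(\<lambda>t. A n (cis t)) \<in> borel_measurable T_meas" for n
    using hb[of n] by (simp add: Hbar_iff meas_T_def)
  have mB [measurable]: "(\<lambda>t. B n (cis t)) \<in> borel_measurable T_meas" for n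
    using hb[of n] by (simp add: Hbar_iff meas_T_def)
  define u where "u n t = cnj (A n (cis t)) / G t" for n t
  define v where "v n t = B n (cis t) / G t" for n t
  have mu [measurable]: "u n \<in> borel_measurable T_meas" for n unfolding u_def by measurable
  have mv [measurable]: "v n \<in> borel_measurable T_meas" for n unfolding v_def by measurable
  have Gu: "AE t in T_meas. G t * u n t = cnj (A n (cis t))" for n
    using uG by eventually_elim (auto simp: u_def)
  have A0u: "A0 (A n) = fc G 0 * fc (u n) 0" if Hu: "H2r (u n)" for n
  proof -
    note mA[of n, measurable] mu[of n, measurable]
    have "A0 (A n) = fc (\<lambda>t. G t * u n t) 0"
      unfolding A0_def
      by (rule fc_cong[OF cnj_meas[OF mA] borel_measurable_times[OF Gm mu]]) (use Gu[of n] in \<open>rule eventually_mono, simp\<close>)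
    also have "\<dots> = fc G 0 * fc (u n) 0" by (rule prod_coeff0[OF HG G1 Hu])
    finally show ?thesis .
  qed
  have Hu0: "H2r (u 0)" using ga A0 unfolding H2_D_iff u_def G_def by simp
  have Hv0: "H2r (v 0)" using gb A0 unfolding H2_D_iff v_def G_def by simp
  have G0: "fc G 0 \<noteq> 0"
    using A0u[OF Hu0] A0_real[OF hb[of 0]] by auto
  have Huv: "H2r (u n) \<and> H2r (v n)" for n
  proof (induction n)
    case 0 then show ?case using Hu0 Hv0 by simp
  next
    case (Suc n)
    then have Hu: "H2r (u n)" and Hv: "H2r (v n)" by auto
    note mA[of n, measurable] mA[of "Suc n", measurable] mB[of n, measurable] mB[of "Suc n", measurable]
      mu[of n, measurable] mu[of "Suc n", measurable] mv[of n, measurable] mv[of "Suc n", measurable]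
    define y where "y = F n"
    define s where "s = sqrt (1 + (cmod y)\<^sup>2)"
    have spos: "s > 0" unfolding s_def by (simp add: add_pos_nonneg)
    have sne: "complex_of_real s \<noteq> 0" using spos by simp
    have AEs: "AE t in T_meas.
       A (Suc n) (cis t) = complex_of_real (1 / s) * (A n (cis t) + y * cnj (B n (cis t))) \<and>
       B (Suc n) (cis t) * cis t = complex_of_real (1 / s) * (B n (cis t) - y * cnj (A n (cis t)))"
      using hs unfolding step_rel_iff s_def y_def by blast
    have aeu: "AE t in T_meas. u (Suc n) t = complex_of_real (1/s) * u n t + (complex_of_real (1/s) * cnj y) * v n t"
      using AEs uG
    proof eventually_elim
      case (elim t)
      then have "G t \<noteq> 0" by auto
      then show ?case using elim by (simp add: u_def v_def field_simps) (simp add: add_divide_distrib)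
    qed
    have Hu': "H2r (u (Suc n))"
      by (rule H2r_cong[OF H2r_add[OF H2r_scale[OF Hu, of "complex_of_real (1/s)"]
         H2r_scale[OF Hv, of "complex_of_real (1/s) * cnj y"]] mu]) (rule eventually_mono[OF aeu], simp)
    define w where "w t = complex_of_real (1/s) * (v n t - y * u n t)" for t
    have [measurable]: "w \<in> borel_measurable T_meas" unfolding w_def by measurable
    have Hw: "H2r w" unfolding w_def by (intro H2r_scale H2r_diff Hv Hu)
    have Gw: "AE t in T_meas. B (Suc n) (cis t) * cis t = G t * w t"
      using AEs uG
    proof eventually_elim
      case (elim t)
      then have "G t \<noteq> 0" by auto
      then have "G t * w t = complex_of_real (1/s) * (B n (cis t) - y * cnj (A n (cis t)))"
        using sne by (simp add: u_def v_def w_def field_simps)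
      then show ?case using elim by simp
    qed
    have "fc (\<lambda>t. G t * w t) 0 = fc (\<lambda>t. B (Suc n) (cis t) * cis t) 0"
      by (rule fc_cong[OF borel_measurable_times[OF Gm] borel_measurable_times[OF mB]]) (use Gw in \<open>auto elim: eventually_mono\<close>)
    also have "\<dots> = 0" unfolding fc_shift_mult
      using hb[of "Suc n"] unfolding Hbar_iff H2r_def by simp
    finally have "fc G 0 * fc w 0 = 0" using prod_coeff0[OF HG G1 Hw] by simp
    then have w0: "fc w 0 = 0" using G0 by simp
    have aev: "AE t in T_meas. v (Suc n) t = w t * cis (- t)"
      using Gw uG
    proof eventually_elim
      case (elim t)
      then have "G t \<noteq> 0" by auto
      then have "v (Suc n) t = (B (Suc n) (cis t) * cis t) * cis (- t) / G t"
        by (simp add: v_def mult.assoc cis_mult)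
      then show ?case using elim \<open>G t \<noteq> 0\<close> by simp
    qed
    have Hv': "H2r (v (Suc n))"
      by (rule H2r_cong[OF H2r_shift_down[OF Hw w0] mv]) (rule eventually_mono[OF aev], simp)
    show ?case using Hu' Hv' by simp
  qed
  define gm where "gm = cmod (fc G 0)"
  have "gm \<le> 1" unfolding gm_def by (rule norm_fc_le[OF _ G1]) measurable
  moreover have "gm \<noteq> 1"
  proof
    assume "gm = 1"
    then have "AE t in T_meas. G t = fc G 0"
      by (intro const_if_norm_fc0[OF Gm uG]) (simp add: gm_def)
    then have "ae_T (\<lambda>z. g z = fc G 0)" unfolding ae_T_def G_def .
    then show False using nc by blast
  qed
  ultimately have g1: "gm < 1" by simp
  have "Re (at_inf (A N)) \<le> gm" for N
  proof -
    have ub: "cmod (fc (u N) 0) \<le> 1"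
    proof (rule norm_fc_le)
      show "u N \<in> borel_measurable T_meas" by measurable
      show "AE t in T_meas. cmod (u N t) \<le> 1"
        using uG hb[of N] unfolding Hbar_iff
      proof -
        have "AE t in T_meas. A N (cis t) * cnj (A N (cis t)) + B N (cis t) * cnj (B N (cis t)) = 1"
          using hb[of N] unfolding Hbar_iff by blast
        then show ?thesis using uG
        proof eventually_elim
          case (elim t)
          then have "cmod (A N (cis t)) \<le> 1" by (intro unit_bound) auto
          then show ?case using elim by (simp add: u_def norm_divide)
        qed
      qed
    qed
    have "Re (at_inf (A N)) \<le> cmod (at_inf (A N))" by (rule complex_Re_le_cmod)
    also have "\<dots> = cmod (fc G 0) * cmod (fc (u N) 0)"
      unfolding at_inf_A0 complex_mod_cnj A0u[OF conjunct1[OF Huv[of N]]] norm_mult ..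
    also have "\<dots> \<le> gm" unfolding gm_def using ub by (simp add: mult_left_le)
    finally show ?thesis .
  qed
  then show ?thesis using g1 by blast
qed

theorem theorem6p3:
  fixes a b :: "complex \<Rightarrow> complex"
  assumes ab: "(a, b) \<in> Hbar"
  shows "(\<exists>!y. \<exists>c d. (c, d) \<in> Hbar \<and> step_rel a b y c d)
    \<and> (\<exists>A B F. A 0 = a \<and> B 0 = b \<and>
         (\<forall>n. (A (Suc n), B (Suc n)) \<in> Hbar \<and> step_rel (A n) (B n) (F n) (A (Suc n)) (B (Suc n))))
    \<and> (\<forall>A B F. A 0 = a \<and> B 0 = b \<and>
         (\<forall>n. (A (Suc n), B (Suc n)) \<in> Hbar \<and> step_rel (A n) (B n) (F n) (A (Suc n)) (B (Suc n)))
       \<longrightarrow> summable (\<lambda>n. (cmod (F n))\<^sup>2)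
         \<and> Re (at_inf a) \<le> (\<Prod>n. 1 / sqrt (1 + (cmod (F n))\<^sup>2))
         \<and> ((a, b) \<notin> Hset \<longrightarrow> Re (at_inf a) < (\<Prod>n. 1 / sqrt (1 + (cmod (F n))\<^sup>2))))"
proof (intro conjI)
  show "\<exists>!y. \<exists>c d. (c, d) \<in> Hbar \<and> step_rel a b y c d"
  proof (rule ex1I)
    show "\<exists>c d. (c, d) \<in> Hbar \<and> step_rel a b (ystar a b) c d" by (rule step_exists[OF ab])
    fix y assume "\<exists>c d. (c, d) \<in> Hbar \<and> step_rel a b y c d"
    then obtain c d where "(c, d) \<in> Hbar" "step_rel a b y c d" by blast
    then show "y = ystar a b" using step_unique(1)[OF ab] by blast
  qed
next
  define nxt where "nxt p = (SOME q. q \<in> Hbar \<and> step_rel (fst p) (snd p) (ystar (fst p) (snd p)) (fst q) (snd q))"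
    for p :: "(complex \<Rightarrow> complex) \<times> (complex \<Rightarrow> complex)"
  have nxt: "nxt p \<in> Hbar \<and> step_rel (fst p) (snd p) (ystar (fst p) (snd p)) (fst (nxt p)) (snd (nxt p))"
    if hp: "p \<in> Hbar" for p
  proof -
    obtain c d where "(c, d) \<in> Hbar" "step_rel (fst p) (snd p) (ystar (fst p) (snd p)) c d"
      using step_exists[of "fst p" "snd p"] hp by (metis prod.collapse)
    then have "\<exists>q. q \<in> Hbar \<and> step_rel (fst p) (snd p) (ystar (fst p) (snd p)) (fst q) (snd q)"
      by (intro exI[of _ "(c, d)"]) auto
    then show ?thesis unfolding nxt_def by (rule someI_ex)
  qed
  define AB where "AB n = (nxt ^^ n) (a, b)" for n
  have ABin: "AB n \<in> Hbar" for n
    by (induction n) (auto simp: AB_def ab nxt)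
  show "\<exists>A B F. A 0 = a \<and> B 0 = b \<and>
         (\<forall>n. (A (Suc n), B (Suc n)) \<in> Hbar \<and> step_rel (A n) (B n) (F n) (A (Suc n)) (B (Suc n)))"
  proof (intro exI conjI allI)
    show "fst (AB 0) = a" "snd (AB 0) = b" by (simp_all add: AB_def)
    fix n
    have e: "AB (Suc n) = nxt (AB n)" by (simp add: AB_def)
    show "(fst (AB (Suc n)), snd (AB (Suc n))) \<in> Hbar" using ABin[of "Suc n"] by simp
    show "step_rel (fst (AB n)) (snd (AB n)) (ystar (fst (AB n)) (snd (AB n))) (fst (AB (Suc n))) (snd (AB (Suc n)))"
      unfolding e using nxt[OF ABin[of n]] by simp
  qed
next
  show "\<forall>A B F. A 0 = a \<and> B 0 = b \<and>
         (\<forall>n. (A (Suc n), B (Suc n)) \<in> Hbar \<and> step_rel (A n) (B n) (F n) (A (Suc n)) (B (Suc n)))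
       \<longrightarrow> summable (\<lambda>n. (cmod (F n))\<^sup>2)
         \<and> Re (at_inf a) \<le> (\<Prod>n. 1 / sqrt (1 + (cmod (F n))\<^sup>2))
         \<and> ((a, b) \<notin> Hset \<longrightarrow> Re (at_inf a) < (\<Prod>n. 1 / sqrt (1 + (cmod (F n))\<^sup>2)))"
  proof (intro allI impI)
    fix A B F
    assume H: "A 0 = a \<and> B 0 = b \<and>
         (\<forall>n. (A (Suc n), B (Suc n)) \<in> Hbar \<and> step_rel (A n) (B n) (F n) (A (Suc n)) (B (Suc n)))"
    have hb: "(A n, B n) \<in> Hbar" for n
      using H ab by (cases n) auto
    define al where "al n = Re (at_inf (A n))" for n
    have alpos: "al n > 0" for n unfolding al_def using A0_real(2)[OF hb[of n]] .
    have alle: "al n \<le> 1" for n unfolding al_def using Re_at_inf_le_1[OF hb[of n]] .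
    have rec: "al (Suc n) = al n * sqrt (1 + (cmod (F n))\<^sup>2)" for n
      unfolding al_def using step_unique(2)[OF hb[of n] hb[of "Suc n"]] H by blast
    note sp = seq_part[of al "\<lambda>n. (cmod (F n))\<^sup>2", OF alpos alle _ rec]
    have a0: "al 0 = Re (at_inf a)" using H by (simp add: al_def)
    show "summable (\<lambda>n. (cmod (F n))\<^sup>2)
         \<and> Re (at_inf a) \<le> (\<Prod>n. 1 / sqrt (1 + (cmod (F n))\<^sup>2))
         \<and> ((a, b) \<notin> Hset \<longrightarrow> Re (at_inf a) < (\<Prod>n. 1 / sqrt (1 + (cmod (F n))\<^sup>2)))"
    proof (intro conjI impI)
      show "summable (\<lambda>n. (cmod (F n))\<^sup>2)" using sp(1) by simp
      show "Re (at_inf a) \<le> (\<Prod>n. 1 / sqrt (1 + (cmod (F n))\<^sup>2))" using sp(2) a0 by simp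
      assume nH: "(a, b) \<notin> Hset"
      obtain g where "g < 1" "\<forall>N. Re (at_inf (A N)) \<le> g"
        using not_H_bound[OF ab nH, of A B F] H by blast
      then show "Re (at_inf a) < (\<Prod>n. 1 / sqrt (1 + (cmod (F n))\<^sup>2))"
        using sp(3)[of g] a0 by (simp add: al_def)
    qed
  qed
qed


end
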